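(* Let $( f_u )_{u \in [u_1, u_2]}$ be a continuous strictly increasing family of circle homeomorphisms of the type $f_{\ell, \alpha, \theta}$, with $\rho_1 := \rho(f_{u_1}) < \rho_2 := \rho(f_{u_2})$. Here $\rho(f_u)$ is intended as the actual value of $\lim_{n\to\infty}(F_u^n(x)-x)/n$; in other words, $\rho(f_u)$ can take all real values. Then the function $\rho: [u_1, u_2] \to \mathbb{R}$, $\rho(u) := \rho(f_u)$, is an increasing devil's staircase (namely, an increasing, continuous, non-constant function that is constant on each interval of a family with dense union). This implies in particular that each rotation number in $[\rho_1, \rho_2]$ is realized by at least one $f_u$. Moreover, $\rho$ is constant on an interval if, and only if, the constant is $0$ or $p/q$, with $p,q$ coprime integers and $q$ odd.
   Context: Setting: $f_{\ell,\alpha,\theta}:\mathbb{T}\to\mathbb{T}$ ($\mathbb{T}=\mathbb{R}/\mathbb{Z}$) is the first-return map to a horizontal cross-section of length 1 of the unfolded unit-speed linear flow of the internal-wave billiard (reflection preserving angles with the vertical) in a rectangular trapezoid of height $1/2$, vertical left leg, shorter base $\ell>0$, slanted-leg angle $\alpha$, initial direction $\theta$ with $\alpha<\theta<\pi/2$; it is a piecewise-linear orientation-preserving circle homeomorphism with slopes $\Lambda^{\pm1}$, $\Lambda=\sin(\theta+\alpha)/\sin(\theta-\alpha)$, and two break points $a_0,a_1$ satisfying $f(a_j)=-a_j$. A family $(f_u)_{u\in[u_1,u_2]}$ of such maps is continuous strictly increasing if there are lifts $F_u:\mathbb{R}\to\mathbb{R}$ with $u\mapsto F_u$ continuous in sup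 norm and $u\mapsto F_u(x)$ strictly increasing for each $x$ (equivalently, the coordinates of the two break points are continuous strictly decreasing functions of $u$); examples are varying $\ell$, or varying $-\theta$, with the other parameters fixed. *)

theory Defs
  imports "HOL-Analysis.Analysis"
begin

definition trap_slope :: "real \<Rightarrow> real \<Rightarrow> real" where
  "trap_slope \<alpha> \<theta> = sin (\<theta> + \<alpha>) / sin (\<theta> - \<alpha>)"

text \<open>F is a lift of a map of the type f_{l,alpha,theta}: a piecewise-linear
  orientation-preserving circle homeomorphism with slopes Lambda on [a0,a1] and
  1/Lambda on [a1,a0+1] (extended 1-periodically: F(x+1) = F(x)+1), whose two
  break points satisfy f(a_j) = -a_j on the circle, i.e. F(a_j) + a_j is an integer.\<close>
definition trap_lift :: "(real \<Rightarrow> real) \<Rightarrow> bool" where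
  "trap_lift F \<longleftrightarrow>
    (\<exists>\<alpha> \<theta> a0 a1. 0 < \<alpha> \<and> \<alpha> < \<theta> \<and> \<theta> < pi / 2 \<and>
       a0 < a1 \<and> a1 < a0 + 1 \<and>
       (\<forall>x. F (x + 1) = F x + 1) \<and>
       (\<forall>x\<in>{a0..a1}. F x = F a0 + trap_slope \<alpha> \<theta> * (x - a0)) \<and>
       (\<forall>x\<in>{a1..a0+1}. F x = F a1 + (x - a1) / trap_slope \<alpha> \<theta>) \<and>
       F a0 + a0 \<in> \<int> \<and> F a1 + a1 \<in> \<int>)"

definition rotnum :: "(real \<Rightarrow> real) \<Rightarrow> real" where
  "rotnum F = lim (\<lambda>n. ((F ^^ n) 0 - 0) / real n)"

end

theory Submission
  imports Defs
begin

lemma per_int_gen: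
  fixes h :: "real \<Rightarrow> real"
  assumes "\<And>x. h (x + 1) = h x + c"
  shows "h (x + of_int k) = h x + of_int k * c"
proof -
  have n: "h (y + real n) = h y + real n * c" for y n
  proof (induction n)
    case 0 then show ?case by simp
  next
    case (Suc n)
    have "h (y + real (Suc n)) = h ((y + real n) + 1)" by (simp add: algebra_simps)
    also have "\<dots> = h (y + real n) + c" by (rule assms)
    finally show ?case using Suc by (simp add: algebra_simps)
  qed
  show ?thesis
  proof (cases "k \<ge> 0")
    case True
    then obtain n where "k = int n" by (metis nonneg_eq_int)
    then show ?thesis using n by simp
  next
    case False
    define n where "n = nat (-k)"
    have k: "k = - int n" using False by (simp add: n_def)
    have "h (x - real n + real n) = h (x - real n) + real n * c" by (rule n)
    then show ?thesis using k by (simp add: algebra_simps)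
  qed
qed

lemma per_min:
  fixes h :: "real \<Rightarrow> real"
  assumes c: "continuous_on UNIV h" and p: "\<And>x. h (x + 1) = h x" and pos: "\<And>x. h x > 0"
  shows "\<exists>\<delta>>0. \<forall>x. \<delta> \<le> h x"
proof -
  have pi: "h (x + of_int k) = h x" for x k using per_int_gen[of h 0 x k] p by simp
  obtain x1 where x1: "x1 \<in> {0..1}" "\<forall>y\<in>{0..1}. h x1 \<le> h y"
  proof -
    have "continuous_on {0..1} h" using c by (rule continuous_on_subset) simp
    then show ?thesis using continuous_attains_inf[of "{0..1::real}" h] that by auto
  qed
  have "h x1 \<le> h x" for x
  proof -
    have "h x = h (x - of_int \<lfloor>x\<rfloor>)" using pi[of "x - of_int \<lfloor>x\<rfloor>" "\<lfloor>x\<rfloor>"] by simp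
    moreover have "x - of_int \<lfloor>x\<rfloor> \<in> {0..1}"
      by (simp add: floor_le_ceiling less_imp_le) (linarith)
    ultimately show ?thesis using x1 by simp
  qed
  then show ?thesis using pos[of x1] by blast
qed

lemma no_zero_sign:
  fixes h :: "real \<Rightarrow> real"
  assumes c: "continuous_on UNIV h" and nz: "\<And>x. h x \<noteq> 0"
  shows "(\<forall>x. h x > 0) \<or> (\<forall>x. h x < 0)"
proof (rule ccontr)
  assume "\<not> ?thesis"
  then obtain x y where xy: "h x \<le> 0" "h y \<ge> 0" by (meson not_le)
  have xy': "h x < 0" "h y > 0" using xy nz by (simp_all add: less_le)
  show False
  proof (cases "x \<le> y")
    case True
    have "continuous_on {x..y} h" using c by (rule continuous_on_subset) simp
    then obtain z where "h z = 0" using IVT'[of h x 0 y] xy True by auto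
    then show False using nz by blast
  next
    case False
    have "continuous_on {y..x} h" using c by (rule continuous_on_subset) simp
    then obtain z where "h z = 0" using IVT2'[of h x 0 y] xy False by auto
    then show False using nz by blast
  qed
qed


locale lift =
  fixes G :: "real \<Rightarrow> real"
  assumes smono: "\<And>x y. x < y \<Longrightarrow> G x < G y"
    and per: "\<And>x. G (x + 1) = G x + 1"
    and contG: "continuous_on UNIV G"
begin

lemma per_int: "G (x + of_int k) = G x + of_int k"
  using per_int_gen[of G 1 x k] per by simp

lemma iter_per: "(G ^^ n) (x + of_int k) = (G ^^ n) x + of_int k"
  by (induction n) (auto simp: per_int)

lemma iter_per1: "(G ^^ n) (x + 1) = (G ^^ n) x + 1"
  using iter_per[of n x 1] by simp

lemma iter_smono: "x < y \<Longrightarrow> (G ^^ n) x < (G ^^ n) y"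
  by (induction n) (auto intro: smono)

lemma iter_mono: "x \<le> y \<Longrightarrow> (G ^^ n) x \<le> (G ^^ n) y"
  using iter_smono by (metis less_eq_real_def)

lemma iter_inj: "(G ^^ n) x = (G ^^ n) y \<Longrightarrow> x = y"
  using iter_smono by (metis less_irrefl neq_iff)

lemma iter_le_iff: "(G ^^ n) x \<le> (G ^^ n) y \<longleftrightarrow> x \<le> y"
  using iter_smono iter_mono by (meson not_le)

lemma iter_less_iff: "(G ^^ n) x < (G ^^ n) y \<longleftrightarrow> x < y"
  using iter_smono iter_mono by (meson not_le)

lemma iter_cont: "continuous_on UNIV (G ^^ n)"
proof (induction n)
  case 0 then show ?case by (simp add: continuous_on_id id_def)
next
  case (Suc n)
  have "continuous_on UNIV (G \<circ> (G ^^ n))"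
    by (rule continuous_on_compose[OF Suc]) (rule continuous_on_subset[OF contG], simp)
  then show ?case by simp
qed

lemma iter_bound: "\<bar>(G ^^ n) x - x - (G ^^ n) 0\<bar> \<le> 1"
proof -
  define t where "t = x - of_int \<lfloor>x\<rfloor>"
  have t: "0 \<le> t" "t < 1" unfolding t_def by linarith+
  have "(G ^^ n) x = (G ^^ n) t + of_int \<lfloor>x\<rfloor>" using iter_per[of n t "\<lfloor>x\<rfloor>"] by (simp add: t_def)
  moreover have "(G ^^ n) 0 \<le> (G ^^ n) t" using iter_mono t by simp
  moreover have "(G ^^ n) t \<le> (G ^^ n) 1" using iter_mono t by simp
  moreover have "(G ^^ n) 1 = (G ^^ n) 0 + 1" using iter_per1[of n 0] by simp
  ultimately show ?thesis using t unfolding t_def by (simp add: abs_le_iff) linarith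
qed

end

context lift begin
definition cc :: "nat \<Rightarrow> real" where "cc n = (G ^^ n) 0"

lemma cc_add: "\<bar>cc (m + n) - cc m - cc n\<bar> \<le> 1"
  using iter_bound[of m "cc n"] by (simp add: cc_def funpow_add)

lemma cc_mult: "\<bar>cc (k * n) - real k * cc n\<bar> \<le> real k"
proof (induction k)
  case 0 then show ?case by (simp add: cc_def)
next
  case (Suc k)
  have "\<bar>cc (n + k * n) - cc n - cc (k * n)\<bar> \<le> 1" using cc_add[of n "k*n"] by (simp add: add.commute)
  then show ?case using Suc by (simp add: algebra_simps abs_le_iff)
qed

lemma cc_cauchy:
  assumes "m \<ge> 1" "n \<ge> 1"
  shows "\<bar>cc m / m - cc n / n\<bar> \<le> 1 / m + 1 / n"
proof -
  have a: "\<bar>cc (n * m) - real n * cc m\<bar> \<le> real n" by (rule cc_mult)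
  have b: "\<bar>cc (m * n) - real m * cc n\<bar> \<le> real m" by (rule cc_mult)
  have mp: "real m > 0" "real n > 0" using assms by auto
  have a': "\<bar>cc (m * n) / (m * n) - cc m / m\<bar> \<le> 1 / m"
  proof -
    have "\<bar>cc (m * n) / (m * n) - cc m / m\<bar> = \<bar>cc (n * m) - real n * cc m\<bar> / (real m * real n)"
      using mp by (simp add: field_simps mult.commute abs_divide abs_mult)
    also have "\<dots> \<le> real n / (real m * real n)" by (rule divide_right_mono[OF a]) (use mp in simp)
    also have "\<dots> = 1 / m" using mp by simp
    finally show ?thesis .
  qed
  have b': "\<bar>cc (m * n) / (m * n) - cc n / n\<bar> \<le> 1 / n"
  proof -
    have "\<bar>cc (m * n) / (m * n) - cc n / n\<bar> = \<bar>cc (m * n) - real m * cc n\<bar> / (real m * real n)"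
      using mp by (simp add: field_simps abs_divide abs_mult)
    also have "\<dots> \<le> real m / (real m * real n)" by (rule divide_right_mono[OF b]) (use mp in simp)
    also have "\<dots> = 1 / n" using mp by simp
    finally show ?thesis .
  qed
  show ?thesis using a' b' by (simp add: abs_le_iff)
qed

lemma cc_convergent: "convergent (\<lambda>n. (cc n - 0) / real n)"
proof -
  have "Cauchy (\<lambda>n. (cc n - 0) / real n)"
  proof (rule CauchyI)
    fix e :: real assume e: "e > 0"
    obtain M :: nat where M: "2 / e < M" using reals_Archimedean2 by blast
    have "0 < 2 / e" using e by simp
    then have "real M > 0" using M by linarith
    then have M1: "M \<ge> 1" by simp
    show "\<exists>M. \<forall>m\<ge>M. \<forall>n\<ge>M. norm ((cc m - 0) / real m - (cc n - 0) / real n) < e"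
    proof (intro exI allI impI)
      fix m n assume mn: "M \<le> m" "M \<le> n"
      have "\<bar>cc m / m - cc n / n\<bar> \<le> 1 / m + 1 / n" using cc_cauchy mn M1 by simp
      also have "\<dots> \<le> 1 / M + 1 / M"
        by (intro add_mono divide_left_mono) (use mn M1 in auto)
      also have "\<dots> < e" using M e M1 by (simp add: field_simps)
      finally show "norm ((cc m - 0) / real m - (cc n - 0) / real n) < e" by simp
    qed
  qed
  then show ?thesis by (simp add: Cauchy_convergent_iff)
qed

end

context lift begin
abbreviation "rho \<equiv> rotnum G"

lemma rho_lim: "(\<lambda>n. cc n / real n) \<longlonglongrightarrow> rho"
  using cc_convergent unfolding rotnum_def cc_def[symmetric]
  by (simp add: convergent_LIMSEQ_iff cc_def)

lemma rho_bound0: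
  assumes "n \<ge> 1" shows "\<bar>cc n - real n * rho\<bar> \<le> 1"
proof -
  have np: "real n > 0" using assms by simp
  have lim2: "(\<lambda>m. 1 / real m + 1 / real n) \<longlonglongrightarrow> 0 + 1 / real n"
    by (intro tendsto_add lim_const_over_n tendsto_const)
  have ev: "\<forall>m\<ge>1. \<bar>cc m / m - cc n / n\<bar> \<le> 1 / real m + 1 / real n"
    using cc_cauchy assms by simp
  have l1: "(\<lambda>m. cc m / real m - cc n / n) \<longlonglongrightarrow> rho - cc n / n"
    by (intro tendsto_diff rho_lim tendsto_const)
  have l2: "(\<lambda>m. cc n / n - cc m / real m) \<longlonglongrightarrow> cc n / n - rho"
    by (intro tendsto_diff rho_lim tendsto_const)
  have "rho - cc n / n \<le> 0 + 1 / real n"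
    by (rule LIMSEQ_le[OF l1 lim2]) (use ev in \<open>auto simp: abs_le_iff\<close>)
  moreover have "cc n / n - rho \<le> 0 + 1 / real n"
    by (rule LIMSEQ_le[OF l2 lim2]) (use ev in \<open>auto simp: abs_le_iff\<close>)
  ultimately have "\<bar>cc n / n - rho\<bar> \<le> 1 / n" by (simp add: abs_le_iff)
  then have "\<bar>cc n / n - rho\<bar> * n \<le> 1" using np by (simp add: field_simps)
  moreover have "\<bar>cc n / n - rho\<bar> * n = \<bar>cc n - real n * rho\<bar>"
    using np by (simp add: abs_mult[symmetric] field_simps)
  ultimately show ?thesis by simp
qed

lemma rho_bound: "\<bar>(G ^^ n) x - x - real n * rho\<bar> \<le> 2"
proof (cases "n = 0")
  case True then show ?thesis by simp
next
  case False
  then have "\<bar>cc n - real n * rho\<bar> \<le> 1" using rho_bound0 by simp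
  then show ?thesis using iter_bound[of n x] unfolding cc_def by (simp add: abs_le_iff)
qed

end

context lift begin
lemma arch_le:
  fixes a b :: real
  assumes "\<And>k::nat. k \<ge> 1 \<Longrightarrow> real k * a \<le> real k * b + C"
  shows "a \<le> b"
proof (rule ccontr)
  assume "\<not> a \<le> b"
  then have d: "a - b > 0" by simp
  obtain k :: nat where k: "\<bar>C\<bar> / (a - b) < k" using reals_Archimedean2 by blast
  have "0 \<le> \<bar>C\<bar> / (a - b)" using d by simp
  then have "real k > 0" using k by linarith
  then have k1: "k \<ge> 1" by simp
  have "\<bar>C\<bar> < k * (a - b)" using k d by (simp add: field_simps)
  moreover have "real k * a \<le> real k * b + C" using assms k1 by simp
  ultimately show False by (simp add: algebra_simps)
qed

lemma ge_all:
  assumes q: "q > 0" and h: "\<And>x. (G ^^ q) x \<ge> x + r"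
  shows "r / real q \<le> rho"
proof -
  have ind: "(G ^^ (q * k)) 0 \<ge> real k * r" for k
  proof (induction k)
    case 0 then show ?case by simp
  next
    case (Suc k)
    have "(G ^^ (q * Suc k)) 0 = (G ^^ q) ((G ^^ (q * k)) 0)" by (simp add: funpow_add)
    also have "\<dots> \<ge> (G ^^ (q * k)) 0 + r" by (rule h)
    finally show ?case using Suc by (simp add: algebra_simps)
  qed
  have "real k * r \<le> real k * (real q * rho) + 2" if "k \<ge> 1" for k
    using ind[of k] rho_bound[of "q*k" 0] by (simp add: abs_le_iff algebra_simps)
  then have "r \<le> real q * rho" by (rule arch_le)
  then show ?thesis using q by (simp add: field_simps)
qed

lemma le_all:
  assumes q: "q > 0" and h: "\<And>x. (G ^^ q) x \<le> x + r"
  shows "rho \<le> r / real q"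
proof -
  have ind: "(G ^^ (q * k)) 0 \<le> real k * r" for k
  proof (induction k)
    case 0 then show ?case by simp
  next
    case (Suc k)
    have "(G ^^ (q * Suc k)) 0 = (G ^^ q) ((G ^^ (q * k)) 0)" by (simp add: funpow_add)
    also have "\<dots> \<le> (G ^^ (q * k)) 0 + r" by (rule h)
    finally show ?case using Suc by (simp add: algebra_simps)
  qed
  have "real k * (real q * rho) \<le> real k * r + 2" if "k \<ge> 1" for k
    using ind[of k] rho_bound[of "q*k" 0] by (simp add: abs_le_iff algebra_simps)
  then have "real q * rho \<le> r" by (rule arch_le)
  then show ?thesis using q by (simp add: field_simps)
qed

lemma ge_ex:
  assumes q: "q > 0" and h: "(G ^^ q) x0 \<ge> x0 + of_int p"
  shows "of_int p / real q \<le> rho"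
proof -
  have ind: "(G ^^ (q * k)) x0 \<ge> x0 + real k * of_int p" for k
  proof (induction k)
    case 0 then show ?case by simp
  next
    case (Suc k)
    have "(G ^^ (q * Suc k)) x0 = (G ^^ q) ((G ^^ (q * k)) x0)" by (simp add: funpow_add)
    also have "\<dots> \<ge> (G ^^ q) (x0 + of_int (int k * p))"
      using iter_mono Suc by simp
    also have "(G ^^ q) (x0 + of_int (int k * p)) = (G ^^ q) x0 + of_int (int k * p)"
      by (rule iter_per)
    finally show ?case using h by (simp add: algebra_simps)
  qed
  have "real k * of_int p \<le> real k * (real q * rho) + 2" if "k \<ge> 1" for k
    using ind[of k] rho_bound[of "q*k" x0] by (simp add: abs_le_iff algebra_simps)
  then have "of_int p \<le> real q * rho" by (rule arch_le)
  then show ?thesis using q by (simp add: field_simps)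
qed

lemma le_ex:
  assumes q: "q > 0" and h: "(G ^^ q) x0 \<le> x0 + of_int p"
  shows "rho \<le> of_int p / real q"
proof -
  have ind: "(G ^^ (q * k)) x0 \<le> x0 + real k * of_int p" for k
  proof (induction k)
    case 0 then show ?case by simp
  next
    case (Suc k)
    have "(G ^^ (q * Suc k)) x0 = (G ^^ q) ((G ^^ (q * k)) x0)" by (simp add: funpow_add)
    also have "\<dots> \<le> (G ^^ q) (x0 + of_int (int k * p))"
      using iter_mono Suc by simp
    also have "(G ^^ q) (x0 + of_int (int k * p)) = (G ^^ q) x0 + of_int (int k * p)"
      by (rule iter_per)
    finally show ?case using h by (simp add: algebra_simps)
  qed
  have "real k * (real q * rho) \<le> real k * of_int p + 2" if "k \<ge> 1" for k
    using ind[of k] rho_bound[of "q*k" x0] by (simp add: abs_le_iff algebra_simps)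
  then have "real q * rho \<le> of_int p" by (rule arch_le)
  then show ?thesis using q by (simp add: field_simps)
qed

lemma eq_ex:
  assumes "q > 0" "(G ^^ q) x0 = x0 + of_int p"
  shows "rho = of_int p / real q"
  using ge_ex[of q x0 p] le_ex[of q x0 p] assms by simp

lemma fix_ex:
  assumes q: "q > 0" and r: "rho = of_int p / real q"
  shows "\<exists>x. (G ^^ q) x = x + of_int p"
proof (rule ccontr)
  assume na: "\<not> ?thesis"
  define h where "h x = (G ^^ q) x - x - of_int p" for x
  have hc: "continuous_on UNIV h" unfolding h_def
    by (intro continuous_on_diff iter_cont continuous_on_id continuous_on_const)
  have hp: "h (x + 1) = h x" for x unfolding h_def using iter_per1 by simp
  have nz: "h x \<noteq> 0" for x using na unfolding h_def by (auto simp: algebra_simps)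
  from no_zero_sign[OF hc nz] show False
  proof
    assume "\<forall>x. h x > 0"
    then obtain \<delta> where d: "\<delta> > 0" "\<forall>x. \<delta> \<le> h x" using per_min[OF hc hp] by blast
    have "(G ^^ q) x \<ge> x + (of_int p + \<delta>)" for x using d unfolding h_def by (auto simp: algebra_simps)
    then have "(of_int p + \<delta>) / real q \<le> rho" using ge_all q by blast
    moreover have "\<delta> * real q > 0" using d q by simp
    ultimately show False using r d q by (simp add: field_simps)
  next
    assume "\<forall>x. h x < 0"
    then have "\<forall>x. - h x > 0" by simp
    moreover have "continuous_on UNIV (\<lambda>x. - h x)" using hc by (intro continuous_on_minus)
    ultimately obtain \<delta> where d: "\<delta> > 0" "\<forall>x. \<delta> \<le> - h x" using per_min[of "\<lambda>x. - h x"] hp by force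
    have "(G ^^ q) x \<le> x + (of_int p - \<delta>)" for x using d unfolding h_def by (auto simp: algebra_simps)
    then have "rho \<le> (of_int p - \<delta>) / real q" using le_all q by blast
    moreover have "\<delta> * real q > 0" using d q by simp
    ultimately show False using r d q by (simp add: field_simps)
  qed
qed

end


lemma rho_mono:
  assumes "lift G" "lift H" and le: "\<And>x. G x \<le> H x"
  shows "rotnum G \<le> rotnum H"
proof -
  interpret g: lift G by fact
  interpret h: lift H by fact
  have "(G ^^ n) 0 \<le> (H ^^ n) 0" for n
  proof (induction n)
    case 0 then show ?case by simp
  next
    case (Suc n)
    have "G ((G ^^ n) 0) \<le> H ((G ^^ n) 0)" by (rule le)
    also have "\<dots> \<le> H ((H ^^ n) 0)" using Suc h.iter_mono[of _ _ 1] by simp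
    finally show ?case by simp
  qed
  then have "g.cc n / real n \<le> h.cc n / real n" for n
    unfolding g.cc_def h.cc_def by (simp add: divide_right_mono)
  then show ?thesis using LIMSEQ_le[OF g.rho_lim h.rho_lim] by blast
qed

lemma iter_shift_ge:
  assumes "lift G" "lift H" and le: "\<And>x. G x + \<delta> \<le> H x" and "q \<ge> 1" and "\<delta> \<ge> 0"
  shows "(G ^^ q) x + \<delta> \<le> (H ^^ q) x"
proof -
  interpret g: lift G by fact
  interpret h: lift H by fact
  have m: "(G ^^ n) x \<le> (H ^^ n) x" for n
  proof (induction n)
    case 0 then show ?case by simp
  next
    case (Suc n)
    have "G ((G ^^ n) x) \<le> H ((G ^^ n) x)" using le[of "(G ^^ n) x"] assms(5) by linarith
    also have "\<dots> \<le> H ((H ^^ n) x)" using Suc h.iter_mono[of _ _ 1] by simp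
    finally show ?case by simp
  qed
  obtain k where k: "q = Suc k" using assms(4) by (cases q) auto
  have "(G ^^ q) x + \<delta> = G ((G ^^ k) x) + \<delta>" using k by simp
  also have "\<dots> \<le> H ((G ^^ k) x)" by (rule le)
  also have "\<dots> \<le> H ((H ^^ k) x)" using m h.iter_mono[of _ _ 1] by simp
  finally show ?thesis using k by simp
qed


definition rs :: "(real \<Rightarrow> real) \<Rightarrow> real \<Rightarrow> real \<Rightarrow> bool" where
  "rs G x s \<longleftrightarrow> (\<exists>e>0. \<forall>h. 0 \<le> h \<and> h < e \<longrightarrow> G (x + h) = G x + s * h)"
definition ls :: "(real \<Rightarrow> real) \<Rightarrow> real \<Rightarrow> real \<Rightarrow> bool" where
  "ls G x s \<longleftrightarrow> (\<exists>e>0. \<forall>h. 0 \<le> h \<and> h < e \<longrightarrow> G (x - h) = G x - s * h)"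
definition aff :: "(real \<Rightarrow> real) \<Rightarrow> real \<Rightarrow> real \<Rightarrow> real \<Rightarrow> bool" where
  "aff G x y s \<longleftrightarrow> (\<forall>z. x \<le> z \<and> z \<le> y \<longrightarrow> G z = G x + s * (z - x))"

lemma rs_unique: assumes "rs G x s" "rs G x t" shows "s = t"
proof -
  obtain e1 where e1: "e1 > 0" "\<forall>h. 0 \<le> h \<and> h < e1 \<longrightarrow> G (x + h) = G x + s * h"
    using assms(1) unfolding rs_def by blast
  obtain e2 where e2: "e2 > 0" "\<forall>h. 0 \<le> h \<and> h < e2 \<longrightarrow> G (x + h) = G x + t * h"
    using assms(2) unfolding rs_def by blast
  define h where "h = min e1 e2 / 2"
  have h: "0 < h" "h < e1" "h < e2" using e1 e2 by (auto simp: h_def)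
  have g1: "G (x + h) = G x + s * h" using spec[OF e1(2), of h] h by simp
  have g2: "G (x + h) = G x + t * h" using spec[OF e2(2), of h] h by simp
  from g1 g2 have "s * h = t * h" by linarith
  then show ?thesis using h(1) by (metis mult_cancel_right less_irrefl)
qed

lemma rs_comp_pos:
  assumes "rs G x s" "s > 0" "rs H (G x) t"
  shows "rs (\<lambda>z. H (G z)) x (s * t)"
proof -
  obtain e1 where e1: "e1 > 0" "\<forall>h. 0 \<le> h \<and> h < e1 \<longrightarrow> G (x + h) = G x + s * h"
    using assms(1) unfolding rs_def by blast
  obtain e2 where e2: "e2 > 0" "\<forall>h. 0 \<le> h \<and> h < e2 \<longrightarrow> H (G x + h) = H (G x) + t * h"
    using assms(3) unfolding rs_def by blast
  define e where "e = min e1 (e2 / s)"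
  have "e > 0" using e1 e2 assms(2) by (simp add: e_def)
  moreover have "H (G (x + h)) = H (G x) + s * t * h" if "0 \<le> h" "h < e" for h
  proof -
    have "h < e1" "h < e2 / s" using that by (auto simp: e_def)
    then have "s * h < e2" using assms(2) by (simp add: field_simps)
    moreover have "0 \<le> s * h" using that assms(2) by simp
    ultimately show ?thesis using e1 e2 that \<open>h < e1\<close> by simp
  qed
  ultimately show ?thesis unfolding rs_def by blast
qed

lemma rs_comp_neg:
  assumes "rs G x s" "s < 0" "ls H (G x) t"
  shows "rs (\<lambda>z. H (G z)) x (s * t)"
proof -
  obtain e1 where e1: "e1 > 0" "\<forall>h. 0 \<le> h \<and> h < e1 \<longrightarrow> G (x + h) = G x + s * h"
    using assms(1) unfolding rs_def by blast
  obtain e2 where e2: "e2 > 0" "\<forall>h. 0 \<le> h \<and> h < e2 \<longrightarrow> H (G x - h) = H (G x) - t * h"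
    using assms(3) unfolding ls_def by blast
  define e where "e = min e1 (e2 / (- s))"
  have "e2 / (- s) > 0" by (rule divide_pos_pos) (use e2 assms(2) in auto)
  then have "e > 0" using e1 by (simp add: e_def)
  moreover have "H (G (x + h)) = H (G x) + s * t * h" if "0 \<le> h" "h < e" for h
  proof -
    have "h < e1" "h < e2 / (-s)" using that by (auto simp: e_def)
    then have "(-s) * h < e2" using assms(2) by (simp add: field_simps)
    moreover have "0 \<le> (-s) * h" using that assms(2) by (intro mult_nonneg_nonneg) auto
    ultimately have "H (G x - (-s) * h) = H (G x) - t * ((-s) * h)" using e2 by blast
    moreover have "G (x + h) = G x - (-s) * h" using e1 that \<open>h < e1\<close> by simp
    ultimately show ?thesis by (simp add: algebra_simps)
  qed
  ultimately show ?thesis unfolding rs_def by blast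
qed

lemma ls_comp_pos:
  assumes "ls G x s" "s > 0" "ls H (G x) t"
  shows "ls (\<lambda>z. H (G z)) x (s * t)"
proof -
  obtain e1 where e1: "e1 > 0" "\<forall>h. 0 \<le> h \<and> h < e1 \<longrightarrow> G (x - h) = G x - s * h"
    using assms(1) unfolding ls_def by blast
  obtain e2 where e2: "e2 > 0" "\<forall>h. 0 \<le> h \<and> h < e2 \<longrightarrow> H (G x - h) = H (G x) - t * h"
    using assms(3) unfolding ls_def by blast
  define e where "e = min e1 (e2 / s)"
  have "e > 0" using e1 e2 assms(2) by (simp add: e_def)
  moreover have "H (G (x - h)) = H (G x) - s * t * h" if "0 \<le> h" "h < e" for h
  proof -
    have "h < e1" "h < e2 / s" using that by (auto simp: e_def)
    then have "s * h < e2" using assms(2) by (simp add: field_simps)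
    moreover have "0 \<le> s * h" using that assms(2) by simp
    ultimately show ?thesis using e1 e2 that \<open>h < e1\<close> by simp
  qed
  ultimately show ?thesis unfolding ls_def by blast
qed

lemma aff_rs: assumes "x < y" "aff G x y s" shows "rs G x s"
proof -
  have a1: "\<forall>z. x \<le> z \<and> z \<le> y \<longrightarrow> G z = G x + s * (z - x)" using assms(2) unfolding aff_def .
  have "G (x + h) = G x + s * h" if "0 \<le> h" "h < y - x" for h
    using spec[OF a1, of "x + h"] that by simp
  then show ?thesis unfolding rs_def using assms(1) by (intro exI[of _ "y - x"]) auto
qed

lemma aff_ls: assumes "x < y" "aff G x y s" shows "ls G y s"
proof -
  have a1: "\<forall>z. x \<le> z \<and> z \<le> y \<longrightarrow> G z = G x + s * (z - x)" using assms(2) unfolding aff_def .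
  have gy: "G y = G x + s * (y - x)" using spec[OF a1, of y] assms(1) by simp
  have "G (y - h) = G y - s * h" if "0 \<le> h" "h < y - x" for h
    using spec[OF a1, of "y - h"] that gy by (simp add: algebra_simps)
  then show ?thesis unfolding ls_def using assms(1) by (intro exI[of _ "y - x"]) auto
qed

lemma aff_sub: "aff G x y s \<Longrightarrow> x \<le> x' \<Longrightarrow> x' \<le> y' \<Longrightarrow> y' \<le> y \<Longrightarrow> aff G x' y' s"
  unfolding aff_def
proof (intro allI impI)
  fix z assume a: "\<forall>z. x \<le> z \<and> z \<le> y \<longrightarrow> G z = G x + s * (z - x)" "x \<le> x'" "x' \<le> y'" "y' \<le> y"
    "x' \<le> z \<and> z \<le> y'"
  have "G z = G x + s * (z - x)" "G x' = G x + s * (x' - x)"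
    using spec[OF a(1), of z] spec[OF a(1), of x'] a(2-5) by auto
  then show "G z = G x' + s * (z - x')" by (simp add: algebra_simps)
qed

lemma aff_comp:
  assumes "aff G x y s" "s \<ge> 0" "x \<le> y" "aff H (G x) (G y) t"
  shows "aff (\<lambda>z. H (G z)) x y (s * t)"
  unfolding aff_def
proof (intro allI impI)
  fix z assume z: "x \<le> z \<and> z \<le> y"
  have a1: "\<forall>z. x \<le> z \<and> z \<le> y \<longrightarrow> G z = G x + s * (z - x)" using assms(1) unfolding aff_def .
  have gz: "G z = G x + s * (z - x)" and gy: "G y = G x + s * (y - x)"
    using spec[OF a1, of z] spec[OF a1, of y] z assms(3) by auto
  have "G x \<le> G z" "G z \<le> G y" using gz gy z assms(2) by (auto intro!: mult_left_mono)
  moreover have a2: "\<forall>w. G x \<le> w \<and> w \<le> G y \<longrightarrow> H w = H (G x) + t * (w - G x)"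
    using assms(4) unfolding aff_def .
  ultimately have "H (G z) = H (G x) + t * (G z - G x)" using spec[OF a2, of "G z"] by blast
  also have "G z - G x = s * (z - x)" using gz by simp
  finally show "H (G z) = H (G x) + s * t * (z - x)" by simp
qed

lemma rs_shift:
  assumes "rs G x s" "\<And>z. G (z + c) = G z + c"
  shows "rs G (x + c) s"
proof -
  obtain e where e: "e > 0" "\<forall>h. 0 \<le> h \<and> h < e \<longrightarrow> G (x + h) = G x + s * h"
    using assms(1) unfolding rs_def by blast
  have "G (x + c + h) = G (x + c) + s * h" if "0 \<le> h" "h < e" for h
  proof -
    have "G (x + c + h) = G ((x + h) + c)" by (simp add: algebra_simps)
    also have "\<dots> = G (x + h) + c" by (rule assms(2))
    finally show ?thesis using e that assms(2)[of x] by simp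
  qed
  then show ?thesis unfolding rs_def using e by blast
qed

lemma ls_shift:
  assumes "ls G x s" "\<And>z. G (z + c) = G z + c"
  shows "ls G (x + c) s"
proof -
  obtain e where e: "e > 0" "\<forall>h. 0 \<le> h \<and> h < e \<longrightarrow> G (x - h) = G x - s * h"
    using assms(1) unfolding ls_def by blast
  have "G (x + c - h) = G (x + c) - s * h" if "0 \<le> h" "h < e" for h
  proof -
    have "G (x + c - h) = G ((x - h) + c)" by (simp add: algebra_simps)
    also have "\<dots> = G (x - h) + c" by (rule assms(2))
    finally show ?thesis using e that assms(2)[of x] by simp
  qed
  then show ?thesis unfolding ls_def using e by blast
qed

lemma rs_const_add: "rs G x s \<Longrightarrow> rs (\<lambda>z. G z + c) x s"
  unfolding rs_def by auto


locale trap =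
  fixes F :: "real \<Rightarrow> real" and L a0 d :: real and m0 :: int
  assumes L1: "L > 1" and dL: "d = 1 / (L + 1)"
    and Fper: "\<And>x. F (x + 1) = F x + 1"
    and Fa0: "F a0 = of_int m0 - a0"
    and pc1: "\<And>x. a0 \<le> x \<Longrightarrow> x \<le> a0 + d \<Longrightarrow> F x = F a0 + L * (x - a0)"
    and pc2: "\<And>x. a0 + d \<le> x \<Longrightarrow> x \<le> a0 + 1 \<Longrightarrow> F x = F (a0 + d) + (x - (a0 + d)) / L"
begin

lemma d_pos: "0 < d" using L1 dL by simp
lemma d_lt1: "d < 1" using L1 dL by simp
lemma Ld: "L * d = 1 - d" using L1 dL by (simp add: field_simps)
lemma dL2: "(1 - d) / L = d" using L1 dL by (simp add: field_simps)
lemma L0: "L > 0" using L1 by simp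

lemma le_Lmul: assumes "0 \<le> c" shows "c \<le> L * c"
proof -
  have "1 * c \<le> L * c" by (rule mult_right_mono) (use L1 assms in auto)
  then show ?thesis by simp
qed

lemma Fint: "F (x + of_int k) = F x + of_int k"
  using per_int_gen[of F 1 x k] Fper by simp

lemma Q1:
  assumes "a0 + of_int k \<le> x" "x \<le> a0 + of_int k + d"
  shows "F x = of_int m0 - a0 + of_int k + L * (x - a0 - of_int k)"
proof -
  have "F x = F ((x - of_int k) + of_int k)" by simp
  also have "\<dots> = F (x - of_int k) + of_int k" by (rule Fint)
  also have "F (x - of_int k) = F a0 + L * (x - of_int k - a0)" using assms by (intro pc1) auto
  finally show ?thesis using Fa0 by (simp add: algebra_simps)
qed

lemma Q2:
  assumes "a0 + of_int k + d \<le> x" "x \<le> a0 + of_int k + 1"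
  shows "F x = of_int m0 - a0 + of_int k + (1 - d) + (x - a0 - of_int k - d) / L"
proof -
  have "F x = F ((x - of_int k) + of_int k)" by simp
  also have "\<dots> = F (x - of_int k) + of_int k" by (rule Fint)
  also have "F (x - of_int k) = F (a0 + d) + (x - of_int k - (a0 + d)) / L" using assms by (intro pc2) auto
  also have "F (a0 + d) = F a0 + L * d" using pc1[of "a0 + d"] d_pos by simp
  finally show ?thesis using Fa0 Ld by (simp add: algebra_simps)
qed

lemma Fa0k: "F (a0 + of_int k) = of_int m0 - a0 + of_int k"
  using Q1[of k "a0 + of_int k"] d_pos by simp

lemma aff1: "aff F (a0 + of_int k) (a0 + of_int k + d) L"
  unfolding aff_def
proof (intro allI impI)
  fix z assume "a0 + of_int k \<le> z \<and> z \<le> a0 + of_int k + d"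
  then show "F z = F (a0 + of_int k) + L * (z - (a0 + of_int k))"
    using Q1[of k z] Fa0k[of k] by (simp add: algebra_simps)
qed

lemma aff2: "aff F (a0 + of_int k + d) (a0 + of_int k + 1) (1 / L)"
  unfolding aff_def
proof (intro allI impI)
  fix z assume z: "a0 + of_int k + d \<le> z \<and> z \<le> a0 + of_int k + 1"
  have h1: "F (a0 + of_int k + d) = of_int m0 - a0 + of_int k + (1 - d)"
    using Q2[of k "a0 + of_int k + d"] d_lt1 by simp
  have h2: "F z = of_int m0 - a0 + of_int k + (1 - d) + (z - a0 - of_int k - d) / L"
    using Q2[of k z] z by simp
  show "F z = F (a0 + of_int k + d) + 1 / L * (z - (a0 + of_int k + d))"
    unfolding h1 h2 using L0 by (simp add: field_simps)
qed

lemma flr: obtains k :: int where "a0 + of_int k \<le> x" "x < a0 + of_int k + 1"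
proof -
  have "a0 + of_int \<lfloor>x - a0\<rfloor> \<le> x" "x < a0 + of_int \<lfloor>x - a0\<rfloor> + 1" by linarith+
  then show ?thesis using that by blast
qed

lemma period_mono:
  assumes "a0 + of_int k \<le> x" "x < y" "y \<le> a0 + of_int k + 1"
  shows "F x < F y"
proof -
  consider "y \<le> a0 + of_int k + d" | "a0 + of_int k + d \<le> x" | "x < a0 + of_int k + d" "a0 + of_int k + d < y"
    by linarith
  then show ?thesis
  proof cases
    case 1 then show ?thesis using Q1[of k x] Q1[of k y] assms L1 by simp
  next
    case 2 then show ?thesis using Q2[of k x] Q2[of k y] assms L1 by (simp add: divide_strict_right_mono)
  next
    case 3
    have "F x = of_int m0 - a0 + of_int k + L * (x - a0 - of_int k)" using Q1[of k x] 3 assms by simp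
    moreover have "L * (x - a0 - of_int k) < L * d" using 3 L1 by simp
    moreover have "F y = of_int m0 - a0 + of_int k + (1 - d) + (y - a0 - of_int k - d) / L"
      using Q2[of k y] 3 assms by simp
    moreover have "(y - a0 - of_int k - d) / L > 0" using 3 L1 by simp
    ultimately show ?thesis using Ld by linarith
  qed
qed

lemma period_mono_le:
  assumes "a0 + of_int k \<le> x" "x \<le> y" "y \<le> a0 + of_int k + 1"
  shows "F x \<le> F y"
  using period_mono[of k x y] assms by (cases "x = y") auto

lemma Fsmono: assumes "x < y" shows "F x < F y"
proof -
  obtain k where k: "a0 + of_int k \<le> x" "x < a0 + of_int k + 1" using flr by blast
  obtain j where j: "a0 + of_int j \<le> y" "y < a0 + of_int j + 1" using flr by blast
  have "of_int k < of_int j + (1::real)" using k j assms by linarith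
  then have "k < j + 1" by (metis of_int_1 of_int_add of_int_less_iff)
  then have "j \<ge> k" by simp
  show ?thesis
  proof (cases "j = k")
    case True then show ?thesis using period_mono[of k x y] k j assms by simp
  next
    case False
    then have jk: "j \<ge> k + 1" using \<open>j \<ge> k\<close> by simp
    have "F x < F (a0 + of_int k + 1)" using period_mono[of k x "a0 + of_int k + 1"] k by simp
    also have "F (a0 + of_int k + 1) = of_int m0 - a0 + of_int k + 1"
      using Fa0k[of "k+1"] by (simp add: add.assoc)
    also have "\<dots> \<le> of_int m0 - a0 + of_int j" using jk by simp
    also have "\<dots> = F (a0 + of_int j)" using Fa0k by simp
    also have "\<dots> \<le> F y" using period_mono_le[of j "a0 + of_int j" y] j by simp
    finally show ?thesis .
  qed
qed

lemma period_lip: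
  assumes "a0 + of_int k \<le> x" "x \<le> y" "y \<le> a0 + of_int k + 1"
  shows "F y - F x \<le> L * (y - x)"
proof -
  consider "y \<le> a0 + of_int k + d" | "a0 + of_int k + d \<le> x" | "x < a0 + of_int k + d" "a0 + of_int k + d < y"
    by linarith
  then show ?thesis
  proof cases
    case 1 then show ?thesis using Q1[of k x] Q1[of k y] assms by (simp add: algebra_simps)
  next
    case 2
    have "F y - F x = (y - x) / L" using Q2[of k x] Q2[of k y] assms 2 by (simp add: diff_divide_distrib)
    also have "\<dots> \<le> (y - x) / 1" by (rule divide_left_mono) (use L1 assms in auto)
    also have "\<dots> = 1 * (y - x)" by simp
    also have "\<dots> \<le> L * (y - x)" by (rule mult_right_mono) (use L1 assms in auto)
    finally show ?thesis .
  next
    case 3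
    have fx: "F x = of_int m0 - a0 + of_int k + L * (x - a0 - of_int k)" using Q1[of k x] 3 assms by simp
    have fy: "F y = of_int m0 - a0 + of_int k + (1 - d) + (y - a0 - of_int k - d) / L"
      using Q2[of k y] 3 assms by simp
    have "(y - a0 - of_int k - d) / L \<le> (y - a0 - of_int k - d) / 1"
      by (rule divide_left_mono) (use 3 L1 in auto)
    also have "\<dots> \<le> L * (y - a0 - of_int k - d)" using le_Lmul[of "y - a0 - of_int k - d"] 3 by simp
    finally have "F y - F x \<le> L * d - L * (x - a0 - of_int k) + L * (y - a0 - of_int k - d)"
      using fx fy Ld by linarith
    then show ?thesis by (simp add: algebra_simps)
  qed
qed

lemma Flip: assumes "x \<le> y" shows "F y - F x \<le> L * (y - x)"
proof -
  obtain k where k: "a0 + of_int k \<le> x" "x < a0 + of_int k + 1" using flr by blast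
  obtain j where j: "a0 + of_int j \<le> y" "y < a0 + of_int j + 1" using flr by blast
  have "of_int k < of_int j + (1::real)" using k j assms by linarith
  then have "k < j + 1" by (metis of_int_1 of_int_add of_int_less_iff)
  then have "j \<ge> k" by simp
  show ?thesis
  proof (cases "j = k")
    case True then show ?thesis using period_lip[of k x y] k j assms by simp
  next
    case False
    then have jk: "j \<ge> k + 1" using \<open>j \<ge> k\<close> by simp
    have a: "F (a0 + of_int k + 1) - F x \<le> L * (a0 + of_int k + 1 - x)"
      using period_lip[of k x "a0 + of_int k + 1"] k by simp
    have b: "F y - F (a0 + of_int j) \<le> L * (y - (a0 + of_int j))"
      using period_lip[of j "a0 + of_int j" y] j by simp
    have c: "F (a0 + of_int k + 1) = of_int m0 - a0 + of_int k + 1"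
      using Fa0k[of "k+1"] by (simp add: add.assoc)
    have e: "F (a0 + of_int j) = of_int m0 - a0 + of_int j" using Fa0k by simp
    have f: "of_int j - of_int k - 1 \<le> L * (of_int j - of_int k - 1)"
      by (rule le_Lmul) (use jk in simp)
    show ?thesis using a b c e f by (simp add: algebra_simps)
  qed
qed

lemma Fabs: "\<bar>F y - F x\<bar> \<le> L * \<bar>y - x\<bar>"
proof (cases "x \<le> y")
  case True
  then show ?thesis using Flip[of x y] Fsmono[of x y] by (cases "x = y") (auto simp: abs_if)
next
  case False
  then show ?thesis using Flip[of y x] Fsmono[of y x] by (auto simp: abs_if)
qed

lemma Fcont: "continuous_on UNIV F"
  unfolding continuous_on_iff
proof (intro ballI allI impI)
  fix x :: real and e :: real assume e: "e > 0"
  show "\<exists>d>0. \<forall>x'\<in>UNIV. dist x' x < d \<longrightarrow> dist (F x') (F x) < e"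
  proof (intro exI[of _ "e / L"] conjI ballI impI)
    show "e / L > 0" using e L1 by simp
    fix x' assume "dist x' x < e / L"
    then have "L * \<bar>x' - x\<bar> < e" using L1 by (simp add: dist_real_def field_simps)
    then show "dist (F x') (F x) < e" using Fabs[of x' x] by (simp add: dist_real_def)
  qed
qed

sublocale lift F
  by unfold_locales (auto intro: Fsmono Fper Fcont)

end

context trap begin

lemma Kinv: "F (- F x) = - x"
proof -
  obtain k where k: "a0 + of_int k \<le> x" "x < a0 + of_int k + 1" using flr by blast
  define t where "t = x - a0 - of_int k"
  define j where "j = - m0 - k - 1"
  have j: "of_int j = - of_int m0 - of_int k - (1::real)" by (simp add: j_def)
  have t: "0 \<le> t" "t < 1" using k by (auto simp: t_def)
  show ?thesis
  proof (cases "x \<le> a0 + of_int k + d")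
    case True
    have fx: "F x = of_int m0 - a0 + of_int k + L * t" using Q1[of k x] k True by (simp add: t_def)
    define y where "y = - F x"
    have ya: "y - a0 - of_int j = 1 - L * t" using fx j by (simp add: y_def)
    have "L * t \<le> L * d" using True L1 by (simp add: t_def)
    moreover have "L * t \<ge> 0" using t L1 by simp
    ultimately have "a0 + of_int j + d \<le> y" "y \<le> a0 + of_int j + 1" using ya Ld by linarith+
    then have "F y = of_int m0 - a0 + of_int j + (1 - d) + (y - a0 - of_int j - d) / L" by (rule Q2)
    also have "(y - a0 - of_int j - d) / L = d - t" using ya Ld L0 by (simp add: field_simps)
    finally show ?thesis using j by (simp add: y_def t_def)
  next
    case False
    have fx: "F x = of_int m0 - a0 + of_int k + (1 - d) + (t - d) / L"
      using Q2[of k x] k False by (simp add: t_def)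
    define y where "y = - F x"
    have ya: "y - a0 - of_int j = d - (t - d) / L" using fx j by (simp add: y_def)
    have "(t - d) / L \<le> (1 - d) / L" using t L1 by (simp add: divide_right_mono)
    then have "(t - d) / L \<le> d" using dL2 by simp
    moreover have "(t - d) / L \<ge> 0" using False L1 by (simp add: t_def)
    ultimately have "a0 + of_int j \<le> y" "y \<le> a0 + of_int j + d" using ya by auto
    then have "F y = of_int m0 - a0 + of_int j + L * (y - a0 - of_int j)" by (rule Q1)
    also have "L * (y - a0 - of_int j) = L * d - (t - d)" using ya L0 by (simp add: field_simps)
    finally show ?thesis using j Ld by (simp add: y_def t_def)
  qed
qed

lemma int_01: "of_int i = (r::real) \<Longrightarrow> 0 \<le> r \<Longrightarrow> r \<le> 1 \<Longrightarrow> i = 0 \<or> i = 1"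
proof -
  assume a: "of_int i = r" "0 \<le> r" "r \<le> 1"
  then have "0 \<le> i" "i \<le> 1" by (metis of_int_0_le_iff, metis of_int_le_1_iff)
  then show ?thesis by auto
qed

lemma int_open01: "of_int i = (r::real) \<Longrightarrow> 0 < r \<Longrightarrow> r < 1 \<Longrightarrow> False"
proof -
  assume a: "of_int i = r" "0 < r" "r < 1"
  then have "0 < i" "i < 1" by (metis of_int_0_less_iff, metis of_int_less_1_iff)
  then show False by auto
qed

lemma Kfix:
  assumes "F y + y = of_int jj"
  shows "(\<exists>k::int. y = a0 + of_int k) \<or> (\<exists>k::int. y = a0 + d + of_int k)"
proof -
  obtain k where k: "a0 + of_int k \<le> y" "y < a0 + of_int k + 1" using flr by blast
  define t where "t = y - a0 - of_int k"
  have t: "0 \<le> t" "t < 1" using k by (auto simp: t_def)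
  show ?thesis
  proof (cases "y \<le> a0 + of_int k + d")
    case True
    have fy: "F y = of_int m0 - a0 + of_int k + L * t" using Q1[of k y] k True by (simp add: t_def)
    have e: "of_int (jj - m0 - 2 * k) = (L + 1) * t" using assms fy by (simp add: t_def algebra_simps)
    have "(L + 1) * t \<le> (L + 1) * d" using True L1 by (simp add: t_def)
    then have "(L + 1) * t \<le> 1" using dL L1 by simp
    moreover have "0 \<le> (L + 1) * t" using t L1 by simp
    ultimately have "jj - m0 - 2 * k = 0 \<or> jj - m0 - 2 * k = 1" using int_01[OF e] by blast
    then have "(L + 1) * t = 0 \<or> (L + 1) * t = 1" by (metis e of_int_0 of_int_1)
    then consider "(L + 1) * t = 0" | "(L + 1) * t = 1" by blast
    then show ?thesis
    proof cases
      case 1 then have "L + 1 = 0 \<or> t = 0" by (simp only: mult_eq_0_iff)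
      then have "t = 0" using L1 by linarith
      then have "y = a0 + of_int k" by (simp add: t_def)
      then show ?thesis by blast
    next
      case 2 then have "t = 1 / (L + 1)" using L1 by (simp add: eq_divide_eq mult.commute)
      then have "t = d" using dL by simp
      then show ?thesis by (auto simp: t_def algebra_simps intro!: exI[of _ k])
    qed
  next
    case False
    have fy: "F y = of_int m0 - a0 + of_int k + (1 - d) + (t - d) / L"
      using Q2[of k y] k False by (simp add: t_def)
    have e: "of_int (jj - m0 - 2 * k - 1) = (t - d) / L + (t - d)" using assms fy by (simp add: t_def algebra_simps)
    have "(t - d) / L < (1 - d) / L" using t L1 by (simp add: divide_strict_right_mono)
    then have "(t - d) / L < d" using dL2 by simp
    moreover have "(t - d) / L > 0" using False L1 by (simp add: t_def)
    moreover have "t - d > 0" using False by (simp add: t_def)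
    ultimately have "0 < (t - d) / L + (t - d)" "(t - d) / L + (t - d) < 1" using t by auto
    then show ?thesis using int_open01[OF e] by blast
  qed
qed

lemma Fa1k: "F (a0 + d + of_int k) = of_int m0 - a0 + of_int k + (1 - d)"
  using Q2[of k "a0 + d + of_int k"] d_lt1 by (simp add: algebra_simps)

lemma F_rs1: "a0 + of_int k \<le> x \<Longrightarrow> x < a0 + of_int k + d \<Longrightarrow> rs F x L"
  by (rule aff_rs[of x "a0 + of_int k + d"]) (auto intro: aff_sub[OF aff1])
lemma F_rs2: "a0 + of_int k + d \<le> x \<Longrightarrow> x < a0 + of_int k + 1 \<Longrightarrow> rs F x (1 / L)"
  by (rule aff_rs[of x "a0 + of_int k + 1"]) (auto intro: aff_sub[OF aff2])
lemma F_ls1: "a0 + of_int k < x \<Longrightarrow> x \<le> a0 + of_int k + d \<Longrightarrow> ls F x L"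
  by (rule aff_ls[of "a0 + of_int k"]) (auto intro: aff_sub[OF aff1])
lemma F_ls2: "a0 + of_int k + d < x \<Longrightarrow> x \<le> a0 + of_int k + 1 \<Longrightarrow> ls F x (1 / L)"
  by (rule aff_ls[of "a0 + of_int k + d"]) (auto intro: aff_sub[OF aff2])

lemma F_rs_any: "rs F x L \<or> rs F x (1 / L)"
proof -
  obtain k where k: "a0 + of_int k \<le> x" "x < a0 + of_int k + 1" using flr by blast
  then show ?thesis using F_rs1[of k x] F_rs2[of k x] by linarith
qed

lemma F_ls_any: "ls F x L \<or> ls F x (1 / L)"
proof -
  obtain k where k: "a0 + of_int k \<le> x" "x < a0 + of_int k + 1" using flr by blast
  show ?thesis
  proof (cases "x = a0 + of_int k")
    case True
    then have "a0 + of_int (k - 1) + d < x" "x \<le> a0 + of_int (k - 1) + 1" using d_lt1 by auto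
    then show ?thesis using F_ls2 by blast
  next
    case False
    then show ?thesis using F_ls1[of k x] F_ls2[of k x] k by linarith
  qed
qed

lemma funpow_Suc_lam: "(f ^^ Suc n) = (\<lambda>z. f ((f ^^ n) z))"
  by auto

lemma iter_rs_par: "\<exists>i::int. rs (F ^^ n) x (L powr of_int i) \<and> (even i \<longleftrightarrow> even n)"
proof (induction n)
  case 0
  show ?case using L0 by (intro exI[of _ 0]) (auto simp: rs_def intro!: exI[of _ 1])
next
  case (Suc n)
  then obtain i where i: "rs (F ^^ n) x (L powr of_int i)" "even i \<longleftrightarrow> even n" by blast
  have pos: "L powr of_int i > 0" using L1 by simp
  from F_rs_any[of "(F ^^ n) x"] show ?case
  proof
    assume "rs F ((F ^^ n) x) L"
    then have "rs (\<lambda>z. F ((F ^^ n) z)) x (L powr of_int i * L)" using rs_comp_pos[OF i(1) pos] by blast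
    moreover have "L powr of_int i * L = L powr of_int (i + 1)" using L1 by (simp add: powr_add)
    ultimately show ?case using i(2) by (intro exI[of _ "i + 1"]) (simp only: funpow_Suc_lam, simp)
  next
    assume "rs F ((F ^^ n) x) (1 / L)"
    then have "rs (\<lambda>z. F ((F ^^ n) z)) x (L powr of_int i * (1 / L))" using rs_comp_pos[OF i(1) pos] by blast
    moreover have "L powr of_int i * (1 / L) = L powr of_int (i - 1)" using L1 by (simp add: powr_diff)
    ultimately show ?case using i(2) by (intro exI[of _ "i - 1"]) (simp only: funpow_Suc_lam, simp)
  qed
qed

lemma iter_rs_pos: "\<exists>s>0. rs (F ^^ n) x s"
  using iter_rs_par[of n x] L1 by (metis powr_gt_zero less_numeral_extra(3) less_trans zero_less_one)

lemma iter_ls_pos: "\<exists>s>0. ls (F ^^ n) x s"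
proof (induction n)
  case 0
  show ?case by (intro exI[of _ 1]) (auto simp: ls_def intro!: exI[of _ 1])
next
  case (Suc n)
  then obtain s where s: "s > 0" "ls (F ^^ n) x s" by blast
  obtain t where t: "t > 0" "ls F ((F ^^ n) x) t"
  proof (cases "ls F ((F ^^ n) x) L")
    case True then show ?thesis using that L0 by blast
  next
    case False then show ?thesis using that[of "1 / L"] F_ls_any[of "(F ^^ n) x"] L0 by simp
  qed
  have "ls (\<lambda>z. F ((F ^^ n) z)) x (s * t)" by (rule ls_comp_pos[OF s(2) s(1) t(2)])
  then show ?case using s t by (intro exI[of _ "s * t"]) (simp only: funpow_Suc_lam, simp)
qed

lemma L_odd:
  assumes "odd q" and h: "\<And>x. (F ^^ q) x = x + c"
  shows False
proof -
  obtain i :: int where i: "rs (F ^^ q) 0 (L powr of_int i)" "even i \<longleftrightarrow> even q" using iter_rs_par by blast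
  have "rs (F ^^ q) 0 1" unfolding rs_def using h by (intro exI[of _ 1]) auto
  then have "L powr of_int i = 1" using rs_unique[OF i(1)] by simp
  then have "i = 0" using L1 by simp
  then show False using i(2) assms(1) by simp
qed

lemma aff_nobreak:
  assumes xy: "x < y"
    and n0: "\<And>k::int. \<not> (x < a0 + of_int k \<and> a0 + of_int k < y)"
    and n1: "\<And>k::int. \<not> (x < a0 + d + of_int k \<and> a0 + d + of_int k < y)"
  shows "aff F x y L \<or> aff F x y (1 / L)"
proof -
  obtain k where k: "a0 + of_int k \<le> x" "x < a0 + of_int k + 1" using flr by blast
  show ?thesis
  proof (cases "x < a0 + of_int k + d")
    case True
    then have "y \<le> a0 + of_int k + d" using n1[of k] by (auto simp: algebra_simps)
    then have "aff F x y L" using k xy by (intro aff_sub[OF aff1[of k]]) auto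
    then show ?thesis by simp
  next
    case False
    then have "y \<le> a0 + of_int (k + 1)" using n0[of "k + 1"] k by auto
    then have "aff F x y (1 / L)" using k xy False by (intro aff_sub[OF aff2[of k]]) auto
    then show ?thesis by simp
  qed
qed

end

lemma ls_unique: assumes "ls G x s" "ls G x t" shows "s = t"
proof -
  obtain e1 where e1: "e1 > 0" "\<forall>h. 0 \<le> h \<and> h < e1 \<longrightarrow> G (x - h) = G x - s * h"
    using assms(1) unfolding ls_def by blast
  obtain e2 where e2: "e2 > 0" "\<forall>h. 0 \<le> h \<and> h < e2 \<longrightarrow> G (x - h) = G x - t * h"
    using assms(2) unfolding ls_def by blast
  define h where "h = min e1 e2 / 2"
  have h: "0 < h" "h < e1" "h < e2" using e1 e2 by (auto simp: h_def)
  have g1: "G (x - h) = G x - s * h" using spec[OF e1(2), of h] h by simp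
  have g2: "G (x - h) = G x - t * h" using spec[OF e2(2), of h] h by simp
  from g1 g2 have "s * h = t * h" by linarith
  then show ?thesis using h(1) by (metis mult_cancel_right less_irrefl)
qed

lemma rs_neg: "rs G x s \<Longrightarrow> rs (\<lambda>z. - G z) x (- s)"
  unfolding rs_def by auto

locale trap_even = trap F L a0 d m0 for F L a0 d m0 +
  fixes n :: nat and p :: int
  assumes n1: "n \<ge> 1" and cop: "coprime p (2 * int n)"
    and rhoq: "rotnum F = of_int p / real (2 * n)"
begin

definition inC where "inC x \<longleftrightarrow> (F ^^ (2 * n)) x = x + of_int p"

lemma noper:
  assumes m: "0 < m" "m < 2 * n" and h: "(F ^^ m) y = y + of_int k"
  shows False
proof -
  have "rotnum F = of_int k / real m" using eq_ex[OF m(1) h] .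
  then have "of_int k / real m = of_int p / real (2 * n)" using rhoq by simp
  then have "of_int k * real (2 * n) = of_int p * real m" using m n1 by (simp add: field_simps)
  then have "of_int (k * (2 * int n)) = (of_int (p * int m) :: real)" by simp
  then have e: "k * (2 * int n) = p * int m" by (simp only: of_int_eq_iff)
  then have "(2 * int n) dvd p * int m" by (metis dvd_triv_right)
  moreover have "coprime (2 * int n) p" using cop by (simp add: coprime_commute)
  ultimately have "(2 * int n) dvd int m" using coprime_dvd_mult_right_iff by blast
  then have "2 * int n \<le> int m" using m by (intro zdvd_imp_le) auto
  then show False using m by linarith
qed

lemma inC_shift: "inC x \<Longrightarrow> inC (x + of_int k)"
  unfolding inC_def using iter_per[of "2*n" x k] by simp

lemma inC_shift_iff: "inC (x + of_int k) \<longleftrightarrow> inC x"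
  using inC_shift[of x k] inC_shift[of "x + of_int k" "-k"] by auto

lemma inC_F: "inC x \<Longrightarrow> inC ((F ^^ m) x)"
proof -
  assume "inC x"
  then have "(F ^^ (2 * n)) x = x + of_int p" by (simp add: inC_def)
  have "(F ^^ (2 * n)) ((F ^^ m) x) = (F ^^ m) ((F ^^ (2 * n)) x)"
    by (metis comp_apply funpow_add add.commute)
  also have "\<dots> = (F ^^ m) x + of_int p" using \<open>(F ^^ (2 * n)) x = x + of_int p\<close> iter_per by simp
  finally show ?thesis by (simp add: inC_def)
qed

lemma inC_Finv: "inC ((F ^^ m) x) \<Longrightarrow> inC x"
proof -
  assume a: "inC ((F ^^ m) x)"
  have "(F ^^ m) ((F ^^ (2 * n)) x) = (F ^^ (2 * n)) ((F ^^ m) x)"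
    by (metis comp_apply funpow_add add.commute)
  also have "\<dots> = (F ^^ m) x + of_int p" using a by (simp add: inC_def)
  also have "\<dots> = (F ^^ m) (x + of_int p)" using iter_per by simp
  finally show ?thesis using iter_inj by (simp add: inC_def)
qed

lemma KF: "(F ^^ m) (- F ((F ^^ m) x)) = - F x"
proof (induction m)
  case 0 then show ?case by simp
next
  case (Suc m)
  have a: "(F ^^ Suc m) x = F ((F ^^ m) x)" by simp
  have b: "(F ^^ Suc m) y = (F ^^ m) (F y)" for y by (metis comp_apply funpow_Suc_right)
  have "(F ^^ Suc m) (- F ((F ^^ Suc m) x)) = (F ^^ Suc m) (- F (F ((F ^^ m) x)))"
    by (simp only: a)
  also have "\<dots> = (F ^^ m) (F (- F (F ((F ^^ m) x))))" by (rule b)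
  also have "F (- F (F ((F ^^ m) x))) = - F ((F ^^ m) x)" by (rule Kinv)
  finally show ?case using Suc by simp
qed

lemma Kinv2: "- F (- F x) = x" using Kinv[of x] by simp

lemma inC_K: "inC x \<Longrightarrow> inC (- F x)"
proof -
  assume "inC x"
  then have e: "(F ^^ (2 * n)) x = x + of_int p" by (simp add: inC_def)
  have "(F ^^ (2 * n)) (- F ((F ^^ (2 * n)) x)) = - F x" by (rule KF)
  also have "- F ((F ^^ (2 * n)) x) = - F x - of_int p" using e Fint by simp
  finally have "(F ^^ (2 * n)) (- F x - of_int p) = - F x" .
  then have "(F ^^ (2 * n)) (- F x) - of_int p = - F x"
    using iter_per[of "2*n" "- F x" "- p"] by simp
  then show ?thesis by (simp add: inC_def)
qed

lemma closedC: "closed {x. inC x}"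
  unfolding inC_def
  by (rule closed_Collect_eq) (intro iter_cont continuous_intros)+

lemma Cne: "\<exists>x. inC x"
  using fix_ex[of "2 * n" p] rhoq n1 by (simp add: inC_def)

definition gap where
  "gap c1 c2 \<longleftrightarrow> c1 < c2 \<and> inC c1 \<and> inC c2 \<and> (\<forall>y. c1 < y \<and> y < c2 \<longrightarrow> \<not> inC y)"

lemma gap_ex:
  assumes z: "\<not> inC z"
  shows "\<exists>c1 c2. gap c1 c2 \<and> c1 < z \<and> z < c2"
proof -
  obtain x0 where x0: "inC x0" using Cne by blast
  define S where "S = {c. inC c \<and> c \<le> z}"
  define T where "T = {c. inC c \<and> z \<le> c}"
  have s1: "x0 - of_int \<lceil>x0 - z\<rceil> \<in> S" unfolding S_def
    using inC_shift[OF x0, of "- \<lceil>x0 - z\<rceil>"] by simp linarith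
  have t1: "x0 + of_int \<lceil>z - x0\<rceil> \<in> T" unfolding T_def
    using inC_shift[OF x0, of "\<lceil>z - x0\<rceil>"] by simp linarith
  have cS: "closed S" unfolding S_def
    using closed_Int[OF closedC closed_atMost[of z]] by (simp add: Collect_conj_eq atMost_def)
  have cT: "closed T" unfolding T_def
    using closed_Int[OF closedC closed_atLeast[of z]] by (simp add: Collect_conj_eq atLeast_def)
  have bS: "bdd_above S" unfolding S_def by (rule bdd_aboveI[of _ z]) auto
  have bT: "bdd_below T" unfolding T_def by (rule bdd_belowI[of _ z]) auto
  define c1 where "c1 = Sup S"
  define c2 where "c2 = Inf T"
  have c1S: "c1 \<in> S" unfolding c1_def using closed_contains_Sup[OF _ bS cS] s1 by blast
  have c2T: "c2 \<in> T" unfolding c2_def using closed_contains_Inf[OF _ bT cT] t1 by blast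
  have c1z: "c1 < z" using c1S z unfolding S_def by (auto simp: less_le)
  have c2z: "z < c2" using c2T z unfolding T_def by (auto simp: less_le)
  have "\<not> inC y" if "c1 < y" "y < c2" for y
  proof
    assume y: "inC y"
    show False
    proof (cases "y \<le> z")
      case True
      then have "y \<in> S" using y by (simp add: S_def)
      then have "y \<le> c1" unfolding c1_def using bS by (rule cSup_upper)
      then show False using that by simp
    next
      case False
      then have "y \<in> T" using y by (simp add: T_def)
      then have "c2 \<le> y" unfolding c2_def using bT by (rule cInf_lower)
      then show False using that by simp
    qed
  qed
  then have "gap c1 c2" using c1S c2T c1z c2z unfolding gap_def S_def T_def by auto
  then show ?thesis using c1z c2z by blast
qed

lemma gap_unique:
  assumes "gap c1 c2" "gap e1 e2" "c1 < z" "z < c2" "e1 < z" "z < e2"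
  shows "c1 = e1 \<and> c2 = e2"
proof -
  have "\<not> c1 < e1" using assms unfolding gap_def by (meson less_trans)
  moreover have "\<not> e1 < c1" using assms unfolding gap_def by (meson less_trans)
  moreover have "\<not> c2 < e2" using assms unfolding gap_def by (meson less_trans)
  moreover have "\<not> e2 < c2" using assms unfolding gap_def by (meson less_trans)
  ultimately show ?thesis by linarith
qed

lemma gap_F:
  assumes g: "gap c1 c2"
  shows "gap ((F ^^ m) c1) ((F ^^ m) c2)"
proof -
  have c: "c1 < c2" "inC c1" "inC c2" using g by (auto simp: gap_def)
  have "\<not> inC y" if y: "(F ^^ m) c1 < y" "y < (F ^^ m) c2" for y
  proof
    assume iy: "inC y"
    have "continuous_on {c1..c2} (F ^^ m)" using iter_cont by (rule continuous_on_subset) simp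
    then obtain x where x: "c1 \<le> x" "x \<le> c2" "(F ^^ m) x = y"
      using IVT'[of "F ^^ m" c1 y c2] y c by auto
    have "x \<noteq> c1" "x \<noteq> c2" using x y by auto
    then have "c1 < x" "x < c2" using x by auto
    moreover have "inC x" using iy x inC_Finv by blast
    ultimately show False using g by (auto simp: gap_def)
  qed
  then show ?thesis using c iter_smono inC_F by (auto simp: gap_def)
qed

lemma gap_K:
  assumes g: "gap c1 c2"
  shows "gap (- F c2) (- F c1)"
proof -
  have c: "c1 < c2" "inC c1" "inC c2" using g by (auto simp: gap_def)
  have "\<not> inC y" if y: "- F c2 < y" "y < - F c1" for y
  proof
    assume iy: "inC y"
    have "F c1 < F (- F y)" using y Kinv by simp
    then have "c1 < - F y" using iter_less_iff[of 1] by simp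
    moreover have "F (- F y) < F c2" using y Kinv by simp
    then have "- F y < c2" using iter_less_iff[of 1] by simp
    moreover have "inC (- F y)" using inC_K[OF iy] .
    ultimately show False using g by (auto simp: gap_def)
  qed
  moreover have "- F c2 < - F c1" using c Fsmono by simp
  ultimately show ?thesis using c inC_K by (auto simp: gap_def)
qed

lemma gap_shift:
  assumes g: "gap c1 c2"
  shows "gap (c1 + of_int k) (c2 + of_int k)"
proof -
  have "\<not> inC y" if y: "c1 + of_int k < y" "y < c2 + of_int k" for y
  proof
    assume "inC y"
    then have "inC (y + of_int (- k))" by (rule inC_shift)
    then show False using g y by (auto simp: gap_def)
  qed
  then show ?thesis using g inC_shift by (auto simp: gap_def)
qed

end

context trap_even begin

lemma FnFn: "(F ^^ n) ((F ^^ n) x) = (F ^^ (2 * n)) x"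
  by (metis comp_apply funpow_add mult_2)

lemma kf_iter:
  assumes y: "inC y" and j: "F y + y = of_int j"
  shows "F ((F ^^ n) y) + (F ^^ n) y = of_int (p + j)"
proof -
  define w where "w = (F ^^ n) y"
  have 1: "(F ^^ n) (- F w) = y - of_int j" using KF[of n y] j by (simp add: w_def)
  have "(F ^^ n) (w + of_int (- (p + j))) = (F ^^ n) w + of_int (- (p + j))" by (rule iter_per)
  also have "(F ^^ n) w = y + of_int p" using y FnFn by (simp add: w_def inC_def)
  finally have 2: "(F ^^ n) (w + of_int (- (p + j))) = y - of_int j" by simp
  have "- F w = w + of_int (- (p + j))" using 1 2 iter_inj by metis
  then show ?thesis by (simp add: w_def)
qed

lemma kf_a0: "F a0 + a0 = of_int m0" using Fa0 by simp
lemma kf_a1: "F (a0 + d) + (a0 + d) = of_int (m0 + 1)" using Fa1k[of 0] by simp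

lemma n_lt: "0 < n" "n < 2 * n" using n1 by auto

lemma caseA:
  assumes "inC a0 \<or> inC (a0 + d)"
  shows "inC a0 \<and> inC (a0 + d)"
proof -
  have A: "inC (a0 + d)" if a: "inC a0"
  proof -
    have w: "inC ((F ^^ n) a0)" using inC_F[OF a] .
    have "F ((F ^^ n) a0) + (F ^^ n) a0 = of_int (p + m0)" by (rule kf_iter[OF a kf_a0])
    from Kfix[OF this] show ?thesis
    proof
      assume "\<exists>k. (F ^^ n) a0 = a0 + of_int k"
      then show ?thesis using noper[OF n_lt] by blast
    next
      assume "\<exists>k. (F ^^ n) a0 = a0 + d + of_int k"
      then obtain k where "(F ^^ n) a0 = a0 + d + of_int k" by blast
      then show ?thesis using w inC_shift_iff by simp
    qed
  qed
  have B: "inC a0" if a: "inC (a0 + d)"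
  proof -
    have w: "inC ((F ^^ n) (a0 + d))" using inC_F[OF a] .
    have "F ((F ^^ n) (a0 + d)) + (F ^^ n) (a0 + d) = of_int (p + (m0 + 1))" by (rule kf_iter[OF a kf_a1])
    from Kfix[OF this] show ?thesis
    proof
      assume "\<exists>k. (F ^^ n) (a0 + d) = a0 + of_int k"
      then obtain k where "(F ^^ n) (a0 + d) = a0 + of_int k" by blast
      then show ?thesis using w inC_shift_iff by simp
    next
      assume "\<exists>k. (F ^^ n) (a0 + d) = a0 + d + of_int k"
      then show ?thesis using noper[OF n_lt] by blast
    qed
  qed
  show ?thesis using assms A B by blast
qed

lemma aff_iter_gap:
  assumes g: "gap c1 c2"
    and nb: "\<And>i j. i < m \<Longrightarrow> \<not> ((F ^^ i) c1 < a0 + of_int j \<and> a0 + of_int j < (F ^^ i) c2)"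
    and nb2: "\<And>i j. i < m \<Longrightarrow> \<not> ((F ^^ i) c1 < a0 + d + of_int j \<and> a0 + d + of_int j < (F ^^ i) c2)"
  shows "\<exists>s>0. aff (F ^^ m) c1 c2 s"
  using nb nb2
proof (induction m)
  case 0
  show ?case by (intro exI[of _ 1]) (simp add: aff_def)
next
  case (Suc m)
  then obtain s where s: "s > 0" "aff (F ^^ m) c1 c2 s" by force
  have c12: "c1 < c2" using g by (simp add: gap_def)
  have lt: "(F ^^ m) c1 < (F ^^ m) c2" using c12 iter_smono by simp
  have "aff F ((F ^^ m) c1) ((F ^^ m) c2) L \<or> aff F ((F ^^ m) c1) ((F ^^ m) c2) (1 / L)"
    by (rule aff_nobreak[OF lt]) (use Suc.prems in auto)
  then obtain t where t: "t > 0" "aff F ((F ^^ m) c1) ((F ^^ m) c2) t"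
  proof (elim disjE)
    assume "aff F ((F ^^ m) c1) ((F ^^ m) c2) L" then show ?thesis using that[of L] L0 by blast
  next
    assume "aff F ((F ^^ m) c1) ((F ^^ m) c2) (1 / L)" then show ?thesis using that[of "1 / L"] L0 by simp
  qed
  have "aff (\<lambda>z. F ((F ^^ m) z)) c1 c2 (s * t)"
    by (rule aff_comp[OF s(2) _ _ t(2)]) (use s c12 in auto)
  then show ?case using s t by (intro exI[of _ "s * t"]) (simp only: funpow_Suc_lam, simp)
qed

lemma all_C_A:
  assumes "inC a0" "inC (a0 + d)"
  shows "inC z"
proof (rule ccontr)
  assume z: "\<not> inC z"
  obtain c1 c2 where g: "gap c1 c2" "c1 < z" "z < c2" using gap_ex[OF z] by blast
  have ia: "inC (a0 + of_int j)" "inC (a0 + d + of_int j)" for j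
    using assms inC_shift by auto
  have "\<exists>s>0. aff (F ^^ (2 * n)) c1 c2 s"
  proof (rule aff_iter_gap[OF g(1)])
    fix i j
    have gi: "gap ((F ^^ i) c1) ((F ^^ i) c2)" by (rule gap_F[OF g(1)])
    show "\<not> ((F ^^ i) c1 < a0 + of_int j \<and> a0 + of_int j < (F ^^ i) c2)"
      using gi ia unfolding gap_def by blast
    show "\<not> ((F ^^ i) c1 < a0 + d + of_int j \<and> a0 + d + of_int j < (F ^^ i) c2)"
      using gi ia unfolding gap_def by blast
  qed
  then obtain s where s: "s > 0" "aff (F ^^ (2 * n)) c1 c2 s" by blast
  have a1: "\<forall>w. c1 \<le> w \<and> w \<le> c2 \<longrightarrow> (F ^^ (2 * n)) w = (F ^^ (2 * n)) c1 + s * (w - c1)"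
    using s(2) unfolding aff_def .
  have c1: "(F ^^ (2 * n)) c1 = c1 + of_int p" "(F ^^ (2 * n)) c2 = c2 + of_int p"
    using g(1) unfolding gap_def inC_def by auto
  have "c2 + of_int p = c1 + of_int p + s * (c2 - c1)" using spec[OF a1, of c2] c1 g by simp
  then have e0: "s * (c2 - c1) = c2 - c1" by (simp add: algebra_simps)
  then have e: "s * (c2 - c1) = 1 * (c2 - c1)" by simp
  have "c2 - c1 \<noteq> 0" using g by simp
  then have "s = 1" using e mult_right_cancel by blast
  then have "(F ^^ (2 * n)) z = z + of_int p" using spec[OF a1, of z] c1 g by simp
  then show False using z by (simp add: inC_def)
qed

end

context trap_even begin

lemma caseB:
  assumes nA: "\<not> inC a0" and nB: "\<not> inC (a0 + d)"
  shows False
proof -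
  have nA': "\<not> inC (a0 + of_int k)" for k using nA inC_shift_iff by simp
  have nB': "\<not> inC (a0 + d + of_int k)" for k using nB inC_shift_iff by simp
  obtain c1 c2 where g0: "gap c1 c2" "c1 < a0" "a0 < c2" using gap_ex[OF nA] by blast
  define d1 where "d1 = (F ^^ n) c1"
  define d2 where "d2 = (F ^^ n) c2"
  have g1: "gap d1 d2" using gap_F[OF g0(1)] by (simp add: d1_def d2_def)
  have gd: "d1 < d2" using g1 by (simp add: gap_def)
  have gc: "c1 < c2" using g0 by (simp add: gap_def)
  have iC: "inC c1" "inC c2" "inC d1" "inC d2" using g0 g1 by (auto simp: gap_def)
  have gK: "gap (- F c2) (- F c1)" by (rule gap_K[OF g0(1)])
  have inK: "- F c2 < a0 - of_int m0" "a0 - of_int m0 < - F c1"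
    using Fsmono[OF g0(2)] Fsmono[OF g0(3)] Fa0 by auto
  have gs: "gap (c1 + of_int (- m0)) (c2 + of_int (- m0))" by (rule gap_shift[OF g0(1)])
  have "- F c2 = c1 + of_int (- m0) \<and> - F c1 = c2 + of_int (- m0)"
    by (rule gap_unique[OF gK gs, of "a0 - of_int m0"]) (use inK g0 in auto)
  then have Kc: "- F c2 = c1 - of_int m0" "- F c1 = c2 - of_int m0" by auto
  define M where "M = p + m0"
  have Kd1: "- F d1 = d2 - of_int M"
  proof -
    have "(F ^^ n) (- F d1) = c2 - of_int m0" using KF[of n c1] Kc by (simp add: d1_def)
    moreover have "(F ^^ n) (d2 + of_int (- M)) = (F ^^ n) d2 + of_int (- M)" by (rule iter_per)
    moreover have "(F ^^ n) d2 = c2 + of_int p" using iC FnFn by (simp add: d2_def inC_def)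
    ultimately have "(F ^^ n) (- F d1) = (F ^^ n) (d2 + of_int (- M))" by (simp add: M_def)
    then show ?thesis using iter_inj by fastforce
  qed
  have Kd2: "- F d2 = d1 - of_int M"
  proof -
    have "(F ^^ n) (- F d2) = c1 - of_int m0" using KF[of n c2] Kc by (simp add: d2_def)
    moreover have "(F ^^ n) (d1 + of_int (- M)) = (F ^^ n) d1 + of_int (- M)" by (rule iter_per)
    moreover have "(F ^^ n) d1 = c1 + of_int p" using iC FnFn by (simp add: d1_def inC_def)
    ultimately have "(F ^^ n) (- F d2) = (F ^^ n) (d1 + of_int (- M))" by (simp add: M_def)
    then show ?thesis using iter_inj by fastforce
  qed
  have noA1: "\<not> (d1 < a0 + of_int j \<and> a0 + of_int j < d2)" for j
  proof
    assume a: "d1 < a0 + of_int j \<and> a0 + of_int j < d2"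
    have "d1 = c1 + of_int j \<and> d2 = c2 + of_int j"
      by (rule gap_unique[OF g1 gap_shift[OF g0(1)], of "a0 + of_int j"]) (use a g0 in auto)
    then have "(F ^^ n) c1 = c1 + of_int j" by (simp add: d1_def)
    then show False using noper[OF n_lt] by blast
  qed
  define g where "g x = - F x + of_int M - x" for x
  have gcont: "continuous_on {d1..d2} g" unfolding g_def
    by (rule continuous_on_subset[of UNIV]) (intro continuous_intros Fcont, simp)
  have "g d2 \<le> 0" "0 \<le> g d1" using Kd1 Kd2 gd by (auto simp: g_def)
  then obtain x where x: "d1 \<le> x" "x \<le> d2" "g x = 0"
    using IVT2'[of g d2 0 d1] gd gcont by auto
  have "g d1 \<noteq> 0" "g d2 \<noteq> 0" using Kd1 Kd2 gd by (auto simp: g_def)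
  then have xin: "d1 < x" "x < d2" using x by (auto simp: less_le)
  have "F x + x = of_int M" using x(3) by (simp add: g_def)
  from Kfix[OF this] obtain k1 where xk: "x = a0 + d + of_int k1"
    using noA1 xin by blast
  have d1lo: "a0 + of_int k1 < d1"
  proof (rule ccontr)
    assume "\<not> ?thesis"
    moreover have "d1 \<noteq> a0 + of_int k1" using iC nA' by metis
    ultimately have "d1 < a0 + of_int k1" by simp
    moreover have "a0 + of_int k1 < d2" using xk xin d_pos by simp
    ultimately show False using noA1 by blast
  qed
  have d2hi: "d2 < a0 + of_int k1 + 1"
  proof (rule ccontr)
    assume "\<not> ?thesis"
    moreover have "d2 \<noteq> a0 + of_int (k1 + 1)" using iC nA' by metis
    ultimately have "a0 + of_int (k1 + 1) < d2" by simp
    moreover have "d1 < a0 + of_int (k1 + 1)" using xk xin d_lt1 by simp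
    ultimately show False using noA1 by blast
  qed
  have c1lo: "a0 + of_int (-1) + d < c1"
  proof (rule ccontr)
    assume "\<not> ?thesis"
    moreover have "c1 \<noteq> a0 + d + of_int (-1)" using iC nB' by metis
    ultimately have a: "c1 < a0 + d + of_int (-1)" by simp
    have b: "a0 + d + of_int (-1) < c2" using g0 d_lt1 by simp
    have gs2: "gap (d1 + of_int (-1 - k1)) (d2 + of_int (-1 - k1))" by (rule gap_shift[OF g1])
    have "c1 = d1 + of_int (-1 - k1) \<and> c2 = d2 + of_int (-1 - k1)"
      by (rule gap_unique[OF g0(1) gs2, of "a0 + d + of_int (-1)"]) (use a b xk xin in auto)
    then have "(F ^^ n) c1 = c1 + of_int (1 + k1)" by (simp add: d1_def)
    then show False using noper[OF n_lt] by blast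
  qed
  have rsF_c1: "rs F c1 (1 / L)" by (rule F_rs2[of "-1"]) (use c1lo g0 in auto)
  have rsF_d1: "rs F d1 L" by (rule F_rs1[of k1]) (use d1lo xk xin in auto)
  have lsF_d2: "ls F d2 (1 / L)" by (rule F_ls2[of k1]) (use d2hi xk xin in auto)
  obtain \<sigma> where sg: "\<sigma> > 0" "rs (F ^^ n) c1 \<sigma>" using iter_rs_pos by blast
  obtain \<tau> where tau: "\<tau> > 0" "ls (F ^^ n) (- F d1) \<tau>" using iter_ls_pos by blast
  have r1: "rs (\<lambda>z. - F ((F ^^ n) z)) c1 (\<sigma> * (- L))"
    using rs_comp_pos[OF sg(2) sg(1), of "\<lambda>z. - F z" "- L"] rs_neg[OF rsF_d1] by (simp add: d1_def)
  have r2: "rs (\<lambda>z. (F ^^ n) (- F ((F ^^ n) z))) c1 (\<sigma> * (- L) * \<tau>)"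
    using rs_comp_neg[OF r1 _, of "F ^^ n" \<tau>] sg(1) L0 tau(2) by (simp add: d1_def mult_pos_neg)
  have r3: "(\<lambda>z. (F ^^ n) (- F ((F ^^ n) z))) = (\<lambda>z. - F z)" by (rule ext) (rule KF)
  have r4: "rs (\<lambda>z. - F z) c1 (- (1 / L))" using rs_neg[OF rsF_c1] .
  have key1: "\<sigma> * (- L) * \<tau> = - (1 / L)" using rs_unique[OF r2[unfolded r3] r4] .
  have lsd2: "ls (F ^^ n) d2 \<tau>"
  proof -
    have "ls (F ^^ n) (- F d1 + of_int M) \<tau>" by (rule ls_shift[OF tau(2)]) (rule iter_per)
    then show ?thesis using Kd1 by simp
  qed
  have noBr: "\<not> ((F ^^ i) d1 < a0 + of_int j \<and> a0 + of_int j < (F ^^ i) d2)"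
     "\<not> ((F ^^ i) d1 < a0 + d + of_int j \<and> a0 + d + of_int j < (F ^^ i) d2)"
    if i: "1 \<le> i" "i < n" for i j
  proof -
    have gi: "gap ((F ^^ i) d1) ((F ^^ i) d2)" by (rule gap_F[OF g1])
    have e1: "(F ^^ i) d1 = (F ^^ (i + n)) c1" by (simp add: d1_def funpow_add)
    show "\<not> ((F ^^ i) d1 < a0 + of_int j \<and> a0 + of_int j < (F ^^ i) d2)"
    proof
      assume a: "(F ^^ i) d1 < a0 + of_int j \<and> a0 + of_int j < (F ^^ i) d2"
      have "(F ^^ i) d1 = c1 + of_int j \<and> (F ^^ i) d2 = c2 + of_int j"
        by (rule gap_unique[OF gi gap_shift[OF g0(1)], of "a0 + of_int j"]) (use a g0 in auto)
      then have h: "(F ^^ (i + n)) c1 = c1 + of_int j" using e1 by simp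
      show False by (rule noper[of "i + n" c1 j]) (use i h in auto)
    qed
    show "\<not> ((F ^^ i) d1 < a0 + d + of_int j \<and> a0 + d + of_int j < (F ^^ i) d2)"
    proof
      assume a: "(F ^^ i) d1 < a0 + d + of_int j \<and> a0 + d + of_int j < (F ^^ i) d2"
      have gs3: "gap (d1 + of_int (j - k1)) (d2 + of_int (j - k1))" by (rule gap_shift[OF g1])
      have "(F ^^ i) d1 = d1 + of_int (j - k1) \<and> (F ^^ i) d2 = d2 + of_int (j - k1)"
        by (rule gap_unique[OF gi gs3, of "a0 + d + of_int j"]) (use a xk xin in auto)
      then have h: "(F ^^ i) d1 = d1 + of_int (j - k1)" by simp
      show False by (rule noper[of i d1 "j - k1"]) (use i h in auto)
    qed
  qed
  have Fd12: "F d1 < F d2" using gd Fsmono by simp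
  have gF: "gap (F d1) (F d2)" using gap_F[OF g1, of 1] by simp
  have "\<exists>s>0. aff (F ^^ (n - 1)) (F d1) (F d2) s"
  proof (rule aff_iter_gap[OF gF])
    fix i j assume i: "i < n - 1"
    have e: "(F ^^ i) (F d1) = (F ^^ Suc i) d1" "(F ^^ i) (F d2) = (F ^^ Suc i) d2"
      by (simp_all add: funpow_Suc_right del: funpow.simps)
    show "\<not> ((F ^^ i) (F d1) < a0 + of_int j \<and> a0 + of_int j < (F ^^ i) (F d2))"
      using noBr(1)[of "Suc i" j] i unfolding e by auto
    show "\<not> ((F ^^ i) (F d1) < a0 + d + of_int j \<and> a0 + d + of_int j < (F ^^ i) (F d2))"
      using noBr(2)[of "Suc i" j] i unfolding e by auto
  qed
  then obtain s' where s': "s' > 0" "aff (F ^^ (n - 1)) (F d1) (F d2) s'" by blast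
  have rsA: "rs (F ^^ (n - 1)) (F d1) s'" by (rule aff_rs[OF Fd12 s'(2)])
  have lsA: "ls (F ^^ (n - 1)) (F d2) s'" by (rule aff_ls[OF Fd12 s'(2)])
  have fn: "(F ^^ n) = (\<lambda>z. (F ^^ (n - 1)) (F z))"
  proof -
    have "n = Suc (n - 1)" using n1 by simp
    then have "(F ^^ n) = (F ^^ (n - 1)) \<circ> F" by (metis funpow_Suc_right)
    then show ?thesis by (simp add: comp_def)
  qed
  have rsd1: "rs (F ^^ n) d1 (L * s')" unfolding fn by (rule rs_comp_pos[OF rsF_d1 L0 rsA])
  have lsd2': "ls (F ^^ n) d2 ((1 / L) * s')" unfolding fn
    by (rule ls_comp_pos[OF lsF_d2 _ lsA]) (use L0 in simp)
  have tau_eq: "\<tau> = (1 / L) * s'" using ls_unique[OF lsd2 lsd2'] .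
  have rT: "rs (\<lambda>z. (F ^^ n) ((F ^^ n) z)) c1 (\<sigma> * (L * s'))"
    by (rule rs_comp_pos[OF sg(2) sg(1)]) (use rsd1 in \<open>simp add: d1_def\<close>)
  have "\<sigma> * (L * s') = 1"
  proof -
    have "s' = L * \<tau>" using tau_eq L0 by (simp add: field_simps)
    then have "\<sigma> * (L * s') = L * (\<sigma> * L * \<tau>)" by (simp add: algebra_simps)
    also have "\<sigma> * L * \<tau> = 1 / L" using key1 by (simp add: algebra_simps)
    finally show ?thesis using L0 by simp
  qed
  then have rT1: "rs (F ^^ (2 * n)) c1 1" using rT FnFn by simp
  then obtain e where e: "e > 0" "\<forall>h. 0 \<le> h \<and> h < e \<longrightarrow> (F ^^ (2 * n)) (c1 + h) = (F ^^ (2 * n)) c1 + 1 * h"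
    unfolding rs_def by blast
  define h0 where "h0 = min e (c2 - c1) / 2"
  have h0: "0 < h0" "h0 < e" "h0 < c2 - c1" using e gc by (auto simp: h0_def)
  have "(F ^^ (2 * n)) (c1 + h0) = (F ^^ (2 * n)) c1 + h0" using spec[OF e(2), of h0] h0 by simp
  then have "inC (c1 + h0)" using iC by (simp add: inC_def)
  moreover have "c1 < c1 + h0" "c1 + h0 < c2" using h0 by auto
  ultimately show False using g0(1) by (auto simp: gap_def)
qed

theorem L_even: "(F ^^ (2 * n)) x = x + of_int p"
proof -
  have "inC a0 \<and> inC (a0 + d)" using caseA caseB by blast
  then show ?thesis using all_C_A by (simp add: inC_def)
qed

end

lemma trap_slope_gt1:
  assumes "0 < \<alpha>" "\<alpha> < \<theta>" "\<theta> < pi / 2"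
  shows "trap_slope \<alpha> \<theta> > 1"
proof -
  have s2: "sin (\<theta> - \<alpha>) > 0" using assms by (intro sin_gt_zero) auto
  have c: "cos \<theta> > 0" using assms by (intro cos_gt_zero_pi) auto
  have sa: "sin \<alpha> > 0" using assms by (intro sin_gt_zero) auto
  have "sin (\<theta> + \<alpha>) - sin (\<theta> - \<alpha>) = 2 * cos \<theta> * sin \<alpha>"
    by (simp add: sin_add sin_diff)
  then have "sin (\<theta> + \<alpha>) > sin (\<theta> - \<alpha>)" using c sa by (smt (verit) mult_pos_pos)
  then show ?thesis using s2 by (simp add: trap_slope_def)
qed

lemma trap_lift_trap:
  assumes "trap_lift G"
  shows "\<exists>L a0 d m0. trap G L a0 d m0"
proof -
  obtain \<alpha> \<theta> a0 a1 where h: "0 < \<alpha>" "\<alpha> < \<theta>" "\<theta> < pi / 2" "a0 < a1" "a1 < a0 + 1"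
    "\<forall>x. G (x + 1) = G x + 1"
    "\<forall>x\<in>{a0..a1}. G x = G a0 + trap_slope \<alpha> \<theta> * (x - a0)"
    "\<forall>x\<in>{a1..a0+1}. G x = G a1 + (x - a1) / trap_slope \<alpha> \<theta>"
    "G a0 + a0 \<in> \<int>"
    using assms unfolding trap_lift_def by (elim exE conjE) (rule that; assumption)
  define L where "L = trap_slope \<alpha> \<theta>"
  have L1: "L > 1" unfolding L_def using h trap_slope_gt1 by blast
  define D where "D = a1 - a0"
  have g1: "G (a0 + 1) = G a0 + 1" using h(6) by simp
  have g2: "G (a0 + 1) = G a1 + (a0 + 1 - a1) / L" using bspec[OF h(8), of "a0 + 1"] h(4,5) by (simp add: L_def)
  have g3: "G a1 = G a0 + L * (a1 - a0)" using bspec[OF h(7), of a1] h(4) by (simp add: L_def)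
  have e: "L * D + (1 - D) / L = 1" using g1 g2 g3 by (simp add: D_def algebra_simps)
  then have "L * L * D + (1 - D) = L" using L1 by (simp add: field_simps)
  then have "(L - 1) * (D * (L + 1) - 1) = 0" by (simp add: algebra_simps)
  then have "D * (L + 1) = 1" using L1 by simp
  then have Dd: "D = 1 / (L + 1)" using L1 by (simp add: field_simps)
  obtain m0 where m0: "G a0 + a0 = of_int m0" using h(9) by (metis Ints_cases)
  have "trap G L a0 D m0"
  proof
    show "L > 1" by (rule L1)
    show "D = 1 / (L + 1)" by (rule Dd)
    show "G (x + 1) = G x + 1" for x using h(6) by simp
    show "G a0 = of_int m0 - a0" using m0 by simp
    show "G x = G a0 + L * (x - a0)" if "a0 \<le> x" "x \<le> a0 + D" for x
      using bspec[OF h(7), of x] that by (simp add: L_def D_def)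
    show "G x = G (a0 + D) + (x - (a0 + D)) / L" if "a0 + D \<le> x" "x \<le> a0 + 1" for x
      using bspec[OF h(8), of x] that by (simp add: L_def D_def)
  qed
  then show ?thesis by blast
qed

locale fam =
  fixes F :: "real \<Rightarrow> real \<Rightarrow> real" and u1 u2 :: real
  assumes u12: "u1 < u2"
    and type: "\<forall>u\<in>{u1..u2}. trap_lift (F u)"
    and cont: "\<forall>u\<in>{u1..u2}. \<forall>\<epsilon>>0. \<exists>\<delta>>0. \<forall>v\<in>{u1..u2}.
                 \<bar>v - u\<bar> < \<delta> \<longrightarrow> (\<forall>x. \<bar>F v x - F u x\<bar> \<le> \<epsilon>)"
    and incr: "\<forall>x. \<forall>u\<in>{u1..u2}. \<forall>v\<in>{u1..u2}. u < v \<longrightarrow> F u x < F v x"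
begin

abbreviation "I \<equiv> {u1..u2}"
abbreviation "\<rho> u \<equiv> rotnum (F u)"

lemma tr: "u \<in> I \<Longrightarrow> \<exists>L a0 d m0. trap (F u) L a0 d m0"
  using type trap_lift_trap by blast

lemma lft: assumes "u \<in> I" shows "lift (F u)"
proof -
  obtain L a0 d m0 where "trap (F u) L a0 d m0" using tr[OF assms] by blast
  then interpret t: trap "F u" L a0 d m0 .
  show ?thesis by (rule lift.intro) (auto intro: t.Fsmono t.Fper t.Fcont)
qed

lemma lipU: assumes "u \<in> I" shows "\<exists>L>0. \<forall>x y. \<bar>F u y - F u x\<bar> \<le> L * \<bar>y - x\<bar>"
proof -
  obtain L a0 d m0 where "trap (F u) L a0 d m0" using tr[OF assms] by blast
  then interpret t: trap "F u" L a0 d m0 .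
  show ?thesis using t.Fabs t.L0 by blast
qed

lemma rmono: "u \<in> I \<Longrightarrow> v \<in> I \<Longrightarrow> u \<le> v \<Longrightarrow> \<rho> u \<le> \<rho> v"
proof (cases "u = v")
  case False
  assume a: "u \<in> I" "v \<in> I" "u \<le> v"
  then have "u < v" using False by simp
  then have "\<And>x. F u x \<le> F v x" using incr a by (simp add: less_imp_le)
  then show ?thesis using rho_mono lft a by blast
qed simp

lemma iter_cont_fam:
  assumes u: "u \<in> I"
  shows "\<forall>\<epsilon>>0. \<exists>\<delta>>0. \<forall>v\<in>I. \<bar>v - u\<bar> < \<delta> \<longrightarrow> \<bar>(F v ^^ k) x - (F u ^^ k) x\<bar> < \<epsilon>"
proof (induction k)
  case 0
  then show ?case by (auto intro: exI[of _ 1])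
next
  case (Suc k)
  obtain Lu where Lu: "Lu > 0" "\<forall>x y. \<bar>F u y - F u x\<bar> \<le> Lu * \<bar>y - x\<bar>" using lipU[OF u] by blast
  show ?case
  proof (intro allI impI)
    fix \<epsilon> :: real assume e: "\<epsilon> > 0"
    obtain \<delta>1 where d1: "\<delta>1 > 0" "\<forall>v\<in>I. \<bar>v - u\<bar> < \<delta>1 \<longrightarrow> \<bar>(F v ^^ k) x - (F u ^^ k) x\<bar> < \<epsilon> / (2 * Lu)"
      using Suc e Lu by (metis divide_pos_pos mult_pos_pos zero_less_numeral)
    obtain \<delta>2 where d2: "\<delta>2 > 0" "\<forall>v\<in>I. \<bar>v - u\<bar> < \<delta>2 \<longrightarrow> (\<forall>x. \<bar>F v x - F u x\<bar> \<le> \<epsilon> / 2)"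
      using cont u e by (metis half_gt_zero)
    show "\<exists>\<delta>>0. \<forall>v\<in>I. \<bar>v - u\<bar> < \<delta> \<longrightarrow> \<bar>(F v ^^ Suc k) x - (F u ^^ Suc k) x\<bar> < \<epsilon>"
    proof (intro exI[of _ "min \<delta>1 \<delta>2"] conjI ballI impI)
      show "min \<delta>1 \<delta>2 > 0" using d1 d2 by simp
      fix v assume v: "v \<in> I" "\<bar>v - u\<bar> < min \<delta>1 \<delta>2"
      define y' where "y' = (F v ^^ k) x"
      define y where "y = (F u ^^ k) x"
      have a: "\<bar>y' - y\<bar> < \<epsilon> / (2 * Lu)" using d1 v by (simp add: y'_def y_def)
      have b: "\<bar>F v y' - F u y'\<bar> \<le> \<epsilon> / 2" using d2 v by simp
      have c: "\<bar>F u y' - F u y\<bar> \<le> Lu * \<bar>y' - y\<bar>" using Lu by blast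
      have "Lu * \<bar>y' - y\<bar> < Lu * (\<epsilon> / (2 * Lu))" using mult_strict_left_mono[OF a Lu(1)] .
      also have "\<dots> = \<epsilon> / 2" using Lu by simp
      finally have "\<bar>F v y' - F u y\<bar> < \<epsilon>" using b c by linarith
      then show "\<bar>(F v ^^ Suc k) x - (F u ^^ Suc k) x\<bar> < \<epsilon>" by (simp add: y'_def y_def)
    qed
  qed
qed

lemma rcont: "continuous_on I \<rho>"
  unfolding continuous_on_iff
proof (intro ballI allI impI)
  fix u e assume u: "u \<in> I" and e: "(e::real) > 0"
  interpret lu: lift "F u" using lft[OF u] .
  obtain q :: nat where q: "2 / e < q" using reals_Archimedean2 by blast
  have "0 < 2 / e" using e by simp
  then have qpos: "q > 0" using q by (metis of_nat_0_less_iff less_trans)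
  have qe: "1 / real q < e" using q e qpos by (simp add: field_simps)
  define pU where "pU = \<lfloor>real q * \<rho> u\<rfloor> + 1"
  define pL where "pL = \<lceil>real q * \<rho> u\<rceil> - 1"
  have pU1: "\<rho> u < of_int pU / real q" using qpos unfolding pU_def by (simp add: field_simps; linarith)
  have pU2: "of_int pU / real q \<le> \<rho> u + 1 / real q" using qpos unfolding pU_def by (simp add: field_simps)
  have pL1: "of_int pL / real q < \<rho> u" using qpos unfolding pL_def by (simp add: field_simps; linarith)
  have pL2: "\<rho> u - 1 / real q \<le> of_int pL / real q" using qpos unfolding pL_def by (simp add: field_simps; linarith)
  have hU: "(F u ^^ q) 0 < of_int pU"
  proof (rule ccontr)
    assume "\<not> ?thesis"
    then have "(F u ^^ q) 0 \<ge> 0 + of_int pU" by simp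
    then have "of_int pU / real q \<le> \<rho> u" using lu.ge_ex qpos by blast
    then show False using pU1 by simp
  qed
  have hL: "(F u ^^ q) 0 > of_int pL"
  proof (rule ccontr)
    assume "\<not> ?thesis"
    then have "(F u ^^ q) 0 \<le> 0 + of_int pL" by simp
    then have "\<rho> u \<le> of_int pL / real q" using lu.le_ex qpos by blast
    then show False using pL1 by simp
  qed
  define \<epsilon> where "\<epsilon> = min (of_int pU - (F u ^^ q) 0) ((F u ^^ q) 0 - of_int pL)"
  have ep: "\<epsilon> > 0" using hU hL by (simp add: \<epsilon>_def)
  obtain \<delta> where dl: "\<delta> > 0" "\<forall>v\<in>I. \<bar>v - u\<bar> < \<delta> \<longrightarrow> \<bar>(F v ^^ q) 0 - (F u ^^ q) 0\<bar> < \<epsilon>"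
    using iter_cont_fam[OF u, of q 0] ep by blast
  show "\<exists>d>0. \<forall>v\<in>I. dist v u < d \<longrightarrow> dist (\<rho> v) (\<rho> u) < e"
  proof (intro exI[of _ \<delta>] conjI ballI impI)
    show "\<delta> > 0" by (rule dl(1))
    fix v assume v: "v \<in> I" "dist v u < \<delta>"
    interpret lv: lift "F v" using lft[OF v(1)] .
    have cl: "\<bar>(F v ^^ q) 0 - (F u ^^ q) 0\<bar> < \<epsilon>" using dl v by (simp add: dist_real_def)
    have "(F v ^^ q) 0 \<le> 0 + of_int pU" using cl by (simp add: \<epsilon>_def abs_less_iff)
    then have r1: "\<rho> v \<le> of_int pU / real q" using lv.le_ex qpos by blast
    have "(F v ^^ q) 0 \<ge> 0 + of_int pL" using cl by (simp add: \<epsilon>_def abs_less_iff)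
    then have r2: "of_int pL / real q \<le> \<rho> v" using lv.ge_ex qpos by blast
    show "dist (\<rho> v) (\<rho> u) < e" using r1 r2 pU2 pL2 qe by (simp add: dist_real_def abs_less_iff)
  qed
qed

lemma sep:
  assumes "u \<in> I" "v \<in> I" "u < v"
  shows "\<exists>\<delta>>0. \<forall>x. F u x + \<delta> \<le> F v x"
proof -
  interpret lu: lift "F u" using lft assms by blast
  interpret lv: lift "F v" using lft assms by blast
  define h where "h x = F v x - F u x" for x
  have hc: "continuous_on UNIV h" unfolding h_def by (intro continuous_on_diff lu.contG lv.contG)
  have hp: "h (x + 1) = h x" for x unfolding h_def using lu.per lv.per by simp
  have hpos: "h x > 0" for x unfolding h_def using incr assms by simp
  obtain \<delta> where dd: "\<delta> > 0" "\<forall>x. \<delta> \<le> h x" using per_min[OF hc hp hpos] by blast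
  have "F u x + \<delta> \<le> F v x" for x using spec[OF dd(2), of x] unfolding h_def by simp
  then show ?thesis using dd(1) by blast
qed

end

context fam begin

lemma lftI: "u1 \<le> u \<Longrightarrow> u \<le> u2 \<Longrightarrow> lift (F u)" using lft by simp

lemma plateau_exist:
  assumes ab: "u1 \<le> a" "a < b" "b \<le> u2" and c: "\<rho> a < c" "c < \<rho> b"
    and cq: "c = of_int p / real q" and q: "odd q"
  shows "\<exists>\<alpha> \<beta>. a \<le> \<alpha> \<and> \<alpha> < \<beta> \<and> \<beta> \<le> b \<and> (\<forall>w\<in>{\<alpha>..\<beta>}. \<rho> w = c)"
proof -
  have q0: "q > 0" using q by (cases q) auto
  have contab: "continuous_on {a..b} \<rho>" using rcont by (rule continuous_on_subset) (use ab in auto)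
  obtain u where u: "a \<le> u" "u \<le> b" "\<rho> u = c" using IVT'[of \<rho> a c b] c ab contab by auto
  have uab: "a < u" "u < b" using u c by (auto simp: less_le)
  have uI: "u \<in> I" using u ab by auto
  obtain L a0 d m0 where "trap (F u) L a0 d m0" using tr[OF uI] by blast
  then interpret t: trap "F u" L a0 d m0 .
  obtain x0 where x0: "(F u ^^ q) x0 \<noteq> x0 + of_int p" using t.L_odd[OF q] by blast
  show ?thesis
  proof (cases "(F u ^^ q) x0 > x0 + of_int p")
    case True
    define \<epsilon> where "\<epsilon> = (F u ^^ q) x0 - x0 - of_int p"
    have ep: "\<epsilon> > 0" using True by (simp add: \<epsilon>_def)
    obtain \<delta> where dl: "\<delta> > 0" "\<forall>v\<in>I. \<bar>v - u\<bar> < \<delta> \<longrightarrow> \<bar>(F v ^^ q) x0 - (F u ^^ q) x0\<bar> < \<epsilon>"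
      using iter_cont_fam[OF uI, of q x0] ep by blast
    define v where "v = max a (u - \<delta> / 2)"
    have v: "a \<le> v" "v < u" "\<bar>v - u\<bar> < \<delta>" "v \<in> I" using uab dl ab by (auto simp: v_def)
    interpret lv: lift "F v" using lft[OF v(4)] .
    have "\<bar>(F v ^^ q) x0 - (F u ^^ q) x0\<bar> < \<epsilon>" using dl(2) v(3,4) by blast
    then have "(F v ^^ q) x0 \<ge> x0 + of_int p" by (simp add: \<epsilon>_def abs_less_iff)
    then have "of_int p / real q \<le> \<rho> v" using lv.ge_ex q0 by blast
    moreover have "\<rho> v \<le> \<rho> u" using rmono v uI by simp
    ultimately have rv: "\<rho> v = c" using u cq by simp
    have "\<forall>w\<in>{v..u}. \<rho> w = c"
    proof
      fix w assume w: "w \<in> {v..u}"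
      then have "w \<in> I" using v uI by auto
      then show "\<rho> w = c" using rmono[of v w] rmono[of w u] v uI w rv u by force
    qed
    then show ?thesis using v uab by (intro exI[of _ v] exI[of _ u]) auto
  next
    case False
    then have lt: "(F u ^^ q) x0 < x0 + of_int p" using x0 by simp
    define \<epsilon> where "\<epsilon> = x0 + of_int p - (F u ^^ q) x0"
    have ep: "\<epsilon> > 0" using lt by (simp add: \<epsilon>_def)
    obtain \<delta> where dl: "\<delta> > 0" "\<forall>v\<in>I. \<bar>v - u\<bar> < \<delta> \<longrightarrow> \<bar>(F v ^^ q) x0 - (F u ^^ q) x0\<bar> < \<epsilon>"
      using iter_cont_fam[OF uI, of q x0] ep by blast
    define v where "v = min b (u + \<delta> / 2)"
    have v: "v \<le> b" "u < v" "\<bar>v - u\<bar> < \<delta>" "v \<in> I" using uab dl ab by (auto simp: v_def)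
    interpret lv: lift "F v" using lft[OF v(4)] .
    have "\<bar>(F v ^^ q) x0 - (F u ^^ q) x0\<bar> < \<epsilon>" using dl(2) v(3,4) by blast
    then have "(F v ^^ q) x0 \<le> x0 + of_int p" by (simp add: \<epsilon>_def abs_less_iff)
    then have "\<rho> v \<le> of_int p / real q" using lv.le_ex q0 by blast
    moreover have "\<rho> u \<le> \<rho> v" using rmono v uI by simp
    ultimately have rv: "\<rho> v = c" using u cq by simp
    have "\<forall>w\<in>{u..v}. \<rho> w = c"
    proof
      fix w assume w: "w \<in> {u..v}"
      then have "w \<in> I" using v uI by auto
      then show "\<rho> w = c" using rmono[of u w] rmono[of w v] v uI w rv u by force
    qed
    then show ?thesis using v uab by (intro exI[of _ u] exI[of _ v]) auto
  qed
qed

lemma plateau_in: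
  assumes ab: "u1 \<le> a" "a < b" "b \<le> u2"
  shows "\<exists>\<alpha> \<beta>. a \<le> \<alpha> \<and> \<alpha> < \<beta> \<and> \<beta> \<le> b \<and> (\<exists>c. \<forall>w\<in>{\<alpha>..\<beta>}. \<rho> w = c)"
proof (cases "\<rho> a = \<rho> b")
  case True
  have "\<forall>w\<in>{a..b}. \<rho> w = \<rho> a"
  proof
    fix w assume w: "w \<in> {a..b}"
    then show "\<rho> w = \<rho> a" using rmono[of a w] rmono[of w b] ab True by force
  qed
  then show ?thesis using ab by blast
next
  case False
  then have lt: "\<rho> a < \<rho> b" using rmono[of a b] ab by force
  obtain N :: nat where N: "1 / (\<rho> b - \<rho> a) < N" using reals_Archimedean2 by blast
  define q where "q = 2 * N + 1"
  have qN: "real N < real q" by (simp add: q_def)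
  have "0 < 1 / (\<rho> b - \<rho> a)" using lt by simp
  then have "1 / (\<rho> b - \<rho> a) < real q" using N qN by linarith
  moreover have D: "\<rho> b - \<rho> a > 0" using lt by simp
  ultimately have "1 < real q * (\<rho> b - \<rho> a)" using pos_divide_less_eq[OF D] by simp
  have q0: "real q > 0" by (simp add: q_def)
  have q1: "1 / real q < \<rho> b - \<rho> a" using pos_divide_less_eq[OF q0] \<open>1 < real q * (\<rho> b - \<rho> a)\<close>
    by (simp add: mult.commute)
  define p where "p = \<lfloor>real q * \<rho> a\<rfloor> + 1"
  have c1: "\<rho> a < of_int p / real q" using q0 unfolding p_def by (simp add: field_simps; linarith)
  have c2: "of_int p / real q \<le> \<rho> a + 1 / real q" using q0 unfolding p_def by (simp add: field_simps)
  have oq: "odd q" by (simp add: q_def)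
  have c3: "of_int p / real q < \<rho> b" using c2 q1 by linarith
  show ?thesis using plateau_exist[OF ab c1 c3 refl oq] by blast
qed

end

context fam begin

lemma rat_of: "of_int k / real m \<in> \<rat>"
  by (intro Rats_divide Rats_of_int Rats_of_nat)

lemma nec_rat:
  assumes ab: "u1 \<le> a" "a < b" "b \<le> u2" and h: "\<forall>w\<in>{a..b}. \<rho> w = c"
  shows "c \<in> \<rat>"
proof (rule ccontr)
  assume nq: "c \<notin> \<rat>"
  define u where "u = (a + b) / 2"
  have u: "a < u" "u < b" using ab by (auto simp: u_def)
  have I3: "a \<in> I" "u \<in> I" "b \<in> I" using ab u by auto
  have rc: "\<rho> a = c" "\<rho> u = c" "\<rho> b = c" using h ab u by auto
  obtain \<delta>1 where d1: "\<delta>1 > 0" "\<forall>x. F a x + \<delta>1 \<le> F u x" using sep[OF I3(1,2) u(1)] by blast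
  obtain \<delta>2 where d2: "\<delta>2 > 0" "\<forall>x. F u x + \<delta>2 \<le> F b x" using sep[OF I3(2,3) u(2)] by blast
  interpret la: lift "F a" using lft[OF I3(1)] .
  interpret lu: lift "F u" using lft[OF I3(2)] .
  interpret lb: lift "F b" using lft[OF I3(3)] .
  define \<delta> where "\<delta> = min \<delta>1 \<delta>2"
  have dp: "\<delta> > 0" using d1 d2 by (simp add: \<delta>_def)
  obtain N :: nat where N: "1 / \<delta> < N" using reals_Archimedean2 by blast
  have "0 < 1 / \<delta>" using dp by simp
  then have Np: "real N > 0" using N by linarith
  have Nd: "1 / real N < \<delta>" using N dp Np by (simp add: field_simps)
  define th where "th i = frac ((F u ^^ i) 0)" for i
  define f where "f i = nat \<lfloor>real N * th i\<rfloor>" for i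
  have th01: "0 \<le> th i" "th i < 1" for i by (simp_all add: th_def frac_lt_1)
  have fr: "f ` {0..N} \<subseteq> {0..<N}"
  proof
    fix y assume "y \<in> f ` {0..N}"
    then obtain i where y: "y = f i" by blast
    have "real N * th i < real N" using th01[of i] Np by simp
    then have "\<lfloor>real N * th i\<rfloor> < int N" by (simp add: floor_less_iff)
    moreover have "0 \<le> \<lfloor>real N * th i\<rfloor>" using th01[of i] Np by simp
    ultimately have "nat \<lfloor>real N * th i\<rfloor> < N" using nat_less_iff by blast
    then show "y \<in> {0..<N}" using y by (simp add: f_def)
  qed
  have "\<not> inj_on f {0..N}"
  proof
    assume "inj_on f {0..N}"
    then have "card {0..N} \<le> card {0..<N}" using card_inj_on_le[OF _ fr] by simp
    then show False by simp
  qed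
  then obtain i j where ij0: "i \<in> {0..N}" "j \<in> {0..N}" "i \<noteq> j" "f i = f j"
    unfolding inj_on_def by blast
  obtain i' j' where ij: "i' < j'" "f i' = f j'"
    using ij0 by (metis linorder_neqE_nat)
  have flo: "\<lfloor>real N * th i'\<rfloor> = \<lfloor>real N * th j'\<rfloor>"
    using ij(2) th01 Np unfolding f_def by (simp add: nat_eq_iff2 eq_nat_nat_iff)
  have "\<bar>real N * th j' - real N * th i'\<bar> < 1" using flo by linarith
  then have "real N * \<bar>th j' - th i'\<bar> < 1" by (simp add: abs_mult right_diff_distrib[symmetric])
  then have eN: "\<bar>th j' - th i'\<bar> < 1 / real N" using Np by (simp add: field_simps)
  define m where "m = j' - i'"
  have m0: "m > 0" "m \<ge> 1" using ij by (auto simp: m_def)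
  define x0 where "x0 = (F u ^^ i') 0"
  have jj: "j' = m + i'" using ij by (simp add: m_def)
  have fm: "(F u ^^ m) x0 = (F u ^^ j') 0" unfolding jj x0_def funpow_add by simp
  define k where "k = \<lfloor>(F u ^^ j') 0\<rfloor> - \<lfloor>(F u ^^ i') 0\<rfloor>"
  define e where "e = th j' - th i'"
  have fe: "(F u ^^ m) x0 = x0 + of_int k + e"
    unfolding fm by (simp add: x0_def k_def e_def th_def frac_def)
  have ed: "\<bar>e\<bar> < \<delta>" using eN Nd by (simp add: e_def)
  have "e \<noteq> 0"
  proof
    assume "e = 0"
    then have "\<rho> u = of_int k / real m" using lu.eq_ex[OF m0(1)] fe by simp
    then show False using nq rc rat_of by metis
  qed
  then consider "e < 0" | "e > 0" by linarith
  then show False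
  proof cases
    case 1
    have "(F u ^^ m) x0 + \<delta>2 \<le> (F b ^^ m) x0"
      by (rule iter_shift_ge[OF lft[OF I3(2)] lft[OF I3(3)]]) (use d2 m0 in auto)
    then have "(F b ^^ m) x0 \<ge> x0 + of_int k" using fe ed 1 by (simp add: \<delta>_def)
    then have r1: "of_int k / real m \<le> \<rho> b" using lb.ge_ex m0 by blast
    have "(F u ^^ m) x0 \<le> x0 + of_int k" using fe 1 by simp
    then have r2: "\<rho> u \<le> of_int k / real m" using lu.le_ex m0 by blast
    have "c = of_int k / real m" using r1 r2 rc by simp
    then show False using nq rat_of by metis
  next
    case 2
    have "(F a ^^ m) x0 + \<delta>1 \<le> (F u ^^ m) x0"
      by (rule iter_shift_ge[OF lft[OF I3(1)] lft[OF I3(2)]]) (use d1 m0 in auto)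
    then have "(F a ^^ m) x0 \<le> x0 + of_int k" using fe ed 2 by (simp add: \<delta>_def)
    then have r1: "\<rho> a \<le> of_int k / real m" using la.le_ex m0 by blast
    have "(F u ^^ m) x0 \<ge> x0 + of_int k" using fe 2 by simp
    then have r2: "of_int k / real m \<le> \<rho> u" using lu.ge_ex m0 by blast
    have "c = of_int k / real m" using r1 r2 rc by simp
    then show False using nq rat_of by metis
  qed
qed

lemma nec:
  assumes ab: "u1 \<le> a" "a < b" "b \<le> u2" and h: "\<forall>w\<in>{a..b}. \<rho> w = c"
  shows "c = 0 \<or> (\<exists>p q :: int. coprime p q \<and> odd q \<and> c = of_int p / of_int q)"
proof -
  have "c \<in> \<rat>" by (rule nec_rat[OF ab h])
  then obtain P Q :: int where PQ: "Q > 0" "coprime P Q" "c = of_int P / of_int Q"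
    by (rule Rats_cases')
  show ?thesis
  proof (cases "odd Q")
    case True then show ?thesis using PQ by blast
  next
    case False
    define n' where "n' = nat (Q div 2)"
    have q2: "Q = 2 * (Q div 2)" using False by simp
    have "Q div 2 \<ge> 0" using PQ(1) by simp
    then have Qn: "Q = 2 * int n'" using q2 by (simp add: n'_def)
    have n1: "n' \<ge> 1" using Qn PQ(1) by simp
    have aI: "a \<in> I" "b \<in> I" using ab by auto
    obtain L a0 d m0 where tra: "trap (F a) L a0 d m0" using tr[OF aI(1)] by blast
    have rca: "\<rho> a = c" "\<rho> b = c" using h ab by auto
    have te: "trap_even (F a) L a0 d m0 n' P"
    proof (rule trap_even.intro[OF tra], unfold_locales)
      show "n' \<ge> 1" by (rule n1)
      show "coprime P (2 * int n')" using PQ Qn by simp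
      show "rotnum (F a) = of_int P / real (2 * n')" using rca PQ Qn by simp
    qed
    interpret te: trap_even "F a" L a0 d m0 n' P by (rule te)
    obtain \<delta> where dd: "\<delta> > 0" "\<forall>x. F a x + \<delta> \<le> F b x" using sep[OF aI ab(2)] by blast
    interpret lb: lift "F b" using lft[OF aI(2)] .
    have hb: "(F b ^^ (2 * n')) x \<ge> x + (of_int P + \<delta>)" for x
    proof -
      have "(F a ^^ (2 * n')) x + \<delta> \<le> (F b ^^ (2 * n')) x"
        by (rule iter_shift_ge[OF lft[OF aI(1)] lft[OF aI(2)]]) (use dd n1 in auto)
      then show ?thesis using te.L_even[of x] by simp
    qed
    have "(of_int P + \<delta>) / real (2 * n') \<le> \<rho> b" by (rule lb.ge_all) (use n1 hb in auto)
    then have "(of_int P + \<delta>) / real (2 * n') \<le> of_int P / real (2 * n')" using rca PQ Qn by simp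
    then show ?thesis using dd n1 by (simp add: divide_le_cancel)
  qed
qed

end

theorem theorem3p3:
  fixes F :: "real \<Rightarrow> real \<Rightarrow> real" and u1 u2 :: real
  assumes "u1 < u2"
    and type: "\<forall>u\<in>{u1..u2}. trap_lift (F u)"
    and cont: "\<forall>u\<in>{u1..u2}. \<forall>\<epsilon>>0. \<exists>\<delta>>0. \<forall>v\<in>{u1..u2}.
                 \<bar>v - u\<bar> < \<delta> \<longrightarrow> (\<forall>x. \<bar>F v x - F u x\<bar> \<le> \<epsilon>)"
    and incr: "\<forall>x. \<forall>u\<in>{u1..u2}. \<forall>v\<in>{u1..u2}. u < v \<longrightarrow> F u x < F v x"
    and rho12: "rotnum (F u1) < rotnum (F u2)"
  shows "mono_on {u1..u2} (\<lambda>u. rotnum (F u))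
    \<and> continuous_on {u1..u2} (\<lambda>u. rotnum (F u))
    \<and> (\<exists>u\<in>{u1..u2}. \<exists>v\<in>{u1..u2}. rotnum (F u) \<noteq> rotnum (F v))
    \<and> (\<exists>\<I>. \<I> \<subseteq> {{a..b} | a b. u1 \<le> a \<and> a < b \<and> b \<le> u2}
          \<and> (\<forall>I\<in>\<I>. \<exists>c. \<forall>u\<in>I. rotnum (F u) = c)
          \<and> {u1..u2} \<subseteq> closure (\<Union>\<I>))
    \<and> (\<forall>r\<in>{rotnum (F u1)..rotnum (F u2)}. \<exists>u\<in>{u1..u2}. rotnum (F u) = r)
    \<and> (\<forall>a b c. u1 \<le> a \<and> a < b \<and> b \<le> u2 \<and> (\<forall>u\<in>{a..b}. rotnum (F u) = c) \<longrightarrow>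
          c = 0 \<or> (\<exists>p q :: int. coprime p q \<and> odd q \<and> c = of_int p / of_int q))
    \<and> (\<forall>c. rotnum (F u1) < c \<and> c < rotnum (F u2) \<and>
          (c = 0 \<or> (\<exists>p q :: int. coprime p q \<and> odd q \<and> c = of_int p / of_int q)) \<longrightarrow>
          (\<exists>a b. u1 \<le> a \<and> a < b \<and> b \<le> u2 \<and> (\<forall>u\<in>{a..b}. rotnum (F u) = c)))"
proof -
  interpret fam F u1 u2 using assms by unfold_locales
  have c1: "mono_on {u1..u2} (\<lambda>u. rotnum (F u))"
    by (rule mono_onI) (use rmono in auto)
  have c2: "continuous_on {u1..u2} (\<lambda>u. rotnum (F u))" by (rule rcont)
  have c3: "\<exists>u\<in>{u1..u2}. \<exists>v\<in>{u1..u2}. rotnum (F u) \<noteq> rotnum (F v)"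
    using rho12 assms(1) by (intro bexI[of _ u1] bexI[of _ u2]) auto
  define \<I> where "\<I> = {{a..b} | a b. u1 \<le> a \<and> a < b \<and> b \<le> u2 \<and> (\<exists>c. \<forall>w\<in>{a..b}. rotnum (F w) = c)}"
  have c4: "\<I> \<subseteq> {{a..b} | a b. u1 \<le> a \<and> a < b \<and> b \<le> u2}
          \<and> (\<forall>I\<in>\<I>. \<exists>c. \<forall>u\<in>I. rotnum (F u) = c)
          \<and> {u1..u2} \<subseteq> closure (\<Union>\<I>)"
  proof (intro conjI)
    show "\<I> \<subseteq> {{a..b} | a b. u1 \<le> a \<and> a < b \<and> b \<le> u2}" unfolding \<I>_def by blast
    show "\<forall>I\<in>\<I>. \<exists>c. \<forall>u\<in>I. rotnum (F u) = c" unfolding \<I>_def by blast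
    show "{u1..u2} \<subseteq> closure (\<Union>\<I>)"
    proof
      fix x assume x: "x \<in> {u1..u2}"
      show "x \<in> closure (\<Union>\<I>)"
        unfolding closure_approachable
      proof (intro allI impI)
        fix e :: real assume e: "e > 0"
        define a' where "a' = max u1 (x - e / 2)"
        define b' where "b' = min u2 (x + e / 2)"
        have ab': "u1 \<le> a'" "a' < b'" "b' \<le> u2" using x e assms(1) by (auto simp: a'_def b'_def)
        obtain \<alpha> \<beta> where ab: "a' \<le> \<alpha>" "\<alpha> < \<beta>" "\<beta> \<le> b'" "\<exists>c. \<forall>w\<in>{\<alpha>..\<beta>}. rotnum (F w) = c"
          using plateau_in[OF ab'] by blast
        have "{\<alpha>..\<beta>} \<in> \<I>" unfolding \<I>_def using ab ab' by auto
        then have "\<alpha> \<in> \<Union>\<I>" using ab by (intro UnionI[of "{\<alpha>..\<beta>}"]) auto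
        moreover have "dist \<alpha> x < e" using ab ab' e x
          by (auto simp: a'_def b'_def dist_real_def abs_less_iff)
        ultimately show "\<exists>y\<in>\<Union>\<I>. dist y x < e" by blast
      qed
    qed
  qed
  have c5: "\<forall>r\<in>{rotnum (F u1)..rotnum (F u2)}. \<exists>u\<in>{u1..u2}. rotnum (F u) = r"
  proof
    fix r assume r: "r \<in> {rotnum (F u1)..rotnum (F u2)}"
    obtain u where "u1 \<le> u" "u \<le> u2" "rotnum (F u) = r"
      using IVT'[of "\<lambda>u. rotnum (F u)" u1 r u2] r assms(1) rcont by auto
    then show "\<exists>u\<in>{u1..u2}. rotnum (F u) = r" by auto
  qed
  have c6: "\<forall>a b c. u1 \<le> a \<and> a < b \<and> b \<le> u2 \<and> (\<forall>u\<in>{a..b}. rotnum (F u) = c) \<longrightarrow>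
          c = 0 \<or> (\<exists>p q :: int. coprime p q \<and> odd q \<and> c = of_int p / of_int q)"
    using nec by blast
  have c7: "\<forall>c. rotnum (F u1) < c \<and> c < rotnum (F u2) \<and>
          (c = 0 \<or> (\<exists>p q :: int. coprime p q \<and> odd q \<and> c = of_int p / of_int q)) \<longrightarrow>
          (\<exists>a b. u1 \<le> a \<and> a < b \<and> b \<le> u2 \<and> (\<forall>u\<in>{a..b}. rotnum (F u) = c))"
  proof (intro allI impI)
    fix c assume h: "rotnum (F u1) < c \<and> c < rotnum (F u2) \<and>
          (c = 0 \<or> (\<exists>p q :: int. coprime p q \<and> odd q \<and> c = of_int p / of_int q))"
    have "\<exists>p (q::nat). odd q \<and> c = of_int p / real q"
    proof -
      from h consider "c = 0" | "\<exists>p q :: int. coprime p q \<and> odd q \<and> c = of_int p / of_int q" by blast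
      then show ?thesis
      proof cases
        case 1 then show ?thesis by (intro exI[of _ 0] exI[of _ "1::nat"]) simp
      next
        case 2
        then obtain p q :: int where pq: "odd q" "c = of_int p / of_int q" by blast
        show ?thesis
        proof (cases "q > 0")
          case True
          then show ?thesis using pq by (intro exI[of _ p] exI[of _ "nat q"]) (auto simp: even_nat_iff)
        next
          case False
          then have "q < 0" using pq by (cases "q = 0") auto
          moreover have "c = of_int (- p) / of_int (- q)" using pq by simp
          ultimately show ?thesis using pq by (intro exI[of _ "- p"] exI[of _ "nat (- q)"]) (auto simp: even_nat_iff)
        qed
      qed
    qed
    then obtain p and q :: nat where pq: "odd q" "c = of_int p / real q" by blast
    obtain \<alpha> \<beta> where "u1 \<le> \<alpha> \<and> \<alpha> < \<beta> \<and> \<beta> \<le> u2 \<and> (\<forall>w\<in>{\<alpha>..\<beta>}. rotnum (F w) = c)"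
      using plateau_exist[of u1 u2 c p q] assms(1) h pq by force
    then show "\<exists>a b. u1 \<le> a \<and> a < b \<and> b \<le> u2 \<and> (\<forall>u\<in>{a..b}. rotnum (F u) = c)" by blast
  qed
  show ?thesis using c1 c2 c3 c4 c5 c6 c7 by blast
qed


end
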